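(* For $\omega>0$ small, there exist smooth functions $K_2,K_1,K_0$ on $\mathbb{R}$ such that, with \[ K=\partial_y^4-2\partial_y^2+K_2\partial_y^2+K_1\partial_y+K_0+1, \] one has the operator identity $U M_+M_-=KU$, and for all $k\ge0$, on $\mathbb{R}$, \[ |\partial_y^kK_2|+|\partial_y^kK_1|+|\partial_y^kK_0|\lesssim \omega e^{-(\kappa-\alpha)|y|}. \]
   Context: For $\omega\ge0$, $Q_\omega(y)=\sqrt{4/(1+a_\omega\cosh 2y)}$, $a_\omega=\sqrt{1+\tfrac{16}{3}\omega}$, and $M_+=-\partial_y^2+1+\tfrac{\omega}{3}Q_\omega^4$, $M_-=-\partial_y^2+1-\omega Q_\omega^4$. For $\omega\in(0,\omega_1)$ ($\omega_1>0$ small), $\alpha=\alpha(\omega)>0$ is smooth with $\alpha=\tfrac89\omega+O(\omega^2)$, $\lambda=1-\alpha^2$, $\kappa=\sqrt{2-\alpha^2}$, and $W_1,W_2$ are smooth real functions of $(\omega,y)$, even in $y$, satisfying $M_+W_1=\lambda W_2$, $M_-W_2=\lambda W_1$ and, for $j=1,2$, all $k\ge0$, on $\mathbb{R}$: $|\partial_y^kW_j|\lesssim\omega^ke^{-\alpha|y|}+\omega e^{-|y|}$, $|\partial_y^k(W_1-W_2)|\lesssim\omega e^{-\kappa|y|}$, $|W_j-e^{-\alpha|y|}|\lesssim\omega e^{-\alpha|y|}$ (these are the internal-mode eigenfunctions of the transformed linearized problem of the cubic-quintic NLS around $Q_\omega$). In particular $W_2>0$; set $U=\partial_y-W_2'/W_2$.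 The notation $\lesssim$ means $\le C\,\cdot$ with $C$ independent of $\omega$ and $y$ (possibly depending on $k$). *)

theory Defs
  imports "HOL-Analysis.Analysis"
begin

definition Dk :: "nat \<Rightarrow> (real \<Rightarrow> real) \<Rightarrow> real \<Rightarrow> real" where
  "Dk k f = (deriv ^^ k) f"

definition smooth_fun :: "(real \<Rightarrow> real) \<Rightarrow> bool" where
  "smooth_fun f \<longleftrightarrow> (\<forall>k x. Dk k f differentiable (at x))"

definition smooth_on1 :: "real set \<Rightarrow> (real \<Rightarrow> real) \<Rightarrow> bool" where
  "smooth_on1 S f \<longleftrightarrow> (\<forall>k. \<forall>x\<in>S. Dk k f differentiable (at x))"

definition pd_w :: "(real \<Rightarrow> real \<Rightarrow> real) \<Rightarrow> real \<Rightarrow> real \<Rightarrow> real" where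
  "pd_w F = (\<lambda>w y. deriv (\<lambda>w'. F w' y) w)"

definition pd_y :: "(real \<Rightarrow> real \<Rightarrow> real) \<Rightarrow> real \<Rightarrow> real \<Rightarrow> real" where
  "pd_y F = (\<lambda>w y. deriv (F w) y)"

definition iter_pd :: "bool list \<Rightarrow> (real \<Rightarrow> real \<Rightarrow> real) \<Rightarrow> real \<Rightarrow> real \<Rightarrow> real" where
  "iter_pd ds F = fold (\<lambda>d G. if d then pd_w G else pd_y G) ds F"

definition smooth2_on :: "(real \<times> real) set \<Rightarrow> (real \<Rightarrow> real \<Rightarrow> real) \<Rightarrow> bool" where
  "smooth2_on S F \<longleftrightarrow> (\<forall>ds. continuous_on S (\<lambda>p. iter_pd ds F (fst p) (snd p)) \<and>
      (\<forall>p\<in>S. (\<lambda>w'. iter_pd ds F w' (snd p)) differentiable (at (fst p)) \<and>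
              iter_pd ds F (fst p) differentiable (at (snd p))))"

definition a_om :: "real \<Rightarrow> real" where
  "a_om w = sqrt (1 + 16/3 * w)"

definition Q_om :: "real \<Rightarrow> real \<Rightarrow> real" where
  "Q_om w y = sqrt (4 / (1 + a_om w * cosh (2 * y)))"

definition Mplus :: "real \<Rightarrow> (real \<Rightarrow> real) \<Rightarrow> real \<Rightarrow> real" where
  "Mplus w f = (\<lambda>y. - Dk 2 f y + f y + w / 3 * Q_om w y ^ 4 * f y)"

definition Mminus :: "real \<Rightarrow> (real \<Rightarrow> real) \<Rightarrow> real \<Rightarrow> real" where
  "Mminus w f = (\<lambda>y. - Dk 2 f y + f y - w * Q_om w y ^ 4 * f y)"

definition Uop :: "(real \<Rightarrow> real) \<Rightarrow> (real \<Rightarrow> real) \<Rightarrow> real \<Rightarrow> real" where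
  "Uop W f = (\<lambda>y. deriv f y - deriv W y / W y * f y)"

definition Kop :: "(real \<Rightarrow> real) \<Rightarrow> (real \<Rightarrow> real) \<Rightarrow> (real \<Rightarrow> real) \<Rightarrow> (real \<Rightarrow> real) \<Rightarrow> real \<Rightarrow> real" where
  "Kop K2 K1 K0 f = (\<lambda>y. Dk 4 f y - 2 * Dk 2 f y + K2 y * Dk 2 f y + K1 y * Dk 1 f y
                          + K0 y * f y + f y)"

end

theory Submission
  imports Defs
begin


lemma Dk_0[simp]: "Dk 0 f = f" by (simp add: Dk_def)
lemma Dk_Suc: "Dk (Suc k) f = Dk k (deriv f)" by (simp only: Dk_def funpow_Suc_right comp_def)
lemma Dk_Suc': "Dk (Suc k) f = deriv (Dk k f)" by (simp add: Dk_def)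
lemma Dk_1: "Dk 1 f = deriv f" by (simp add: Dk_def)
lemma Dk_2: "Dk 2 f = deriv (deriv f)" by (simp add: Dk_def eval_nat_numeral)
lemma Dk_4: "Dk 4 f = deriv (deriv (deriv (deriv f)))" by (simp add: Dk_def eval_nat_numeral)

definition G :: "real set \<Rightarrow> nat \<Rightarrow> (real\<Rightarrow>real\<Rightarrow>real) \<Rightarrow> (real\<Rightarrow>real\<Rightarrow>real) \<Rightarrow> bool" where
"G I n B f \<longleftrightarrow> (\<forall>w\<in>I. \<forall>j\<le>n. \<forall>x. Dk j (f w) differentiable (at x)) \<and>
   (\<forall>j\<le>n. \<exists>C\<ge>0. \<forall>w\<in>I. \<forall>y. \<bar>Dk j (f w) y\<bar> \<le> C * B w y)"

lemma all_le_Suc: "(\<forall>j\<le>Suc n. P j) \<longleftrightarrow> P 0 \<and> (\<forall>j\<le>n. P (Suc j))"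
  by (metis Suc_le_mono le0 not0_implies_Suc)

lemma G_Suc: "G I (Suc n) B f \<longleftrightarrow> G I 0 B f \<and> G I n B (\<lambda>w. deriv (f w))"
  unfolding G_def all_le_Suc Dk_Suc by auto

lemma G_mono: "G I n B f \<Longrightarrow> m \<le> n \<Longrightarrow> G I m B f"
  unfolding G_def by (meson order_trans)

lemma G_cong: "G I n B f \<Longrightarrow> (\<And>w. w\<in>I \<Longrightarrow> f w = g w) \<Longrightarrow> G I n B g"
  unfolding G_def by auto

lemma G_0: "G I 0 B f \<longleftrightarrow> (\<forall>w\<in>I. \<forall>x. f w differentiable (at x)) \<and> (\<exists>C\<ge>0. \<forall>w\<in>I. \<forall>y. \<bar>f w y\<bar> \<le> C * B w y)"
  unfolding G_def by auto

lemma G_diff: "G I n B f \<Longrightarrow> w \<in> I \<Longrightarrow> f w differentiable (at x)"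
  unfolding G_def by (metis Dk_0 le0)

lemma deriv_add_fun: "(\<And>x. (f::real\<Rightarrow>real) differentiable (at x)) \<Longrightarrow> (\<And>x. (g::real\<Rightarrow>real) differentiable (at x)) \<Longrightarrow>
  deriv (\<lambda>y. f y + g y) = (\<lambda>y. deriv f y + deriv g y)"
proof -
  assume a: "\<And>x. f differentiable (at x)" "\<And>x. g differentiable (at x)"
  have "\<And>x. (f has_real_derivative deriv f x) (at x)" "\<And>x. (g has_real_derivative deriv g x) (at x)"
    using a DERIV_deriv_iff_real_differentiable by blast+
  then show ?thesis by (intro ext DERIV_imp_deriv) (auto intro!: derivative_eq_intros)
qed

lemma deriv_mult_fun: "(\<And>x. (f::real\<Rightarrow>real) differentiable (at x)) \<Longrightarrow> (\<And>x. (g::real\<Rightarrow>real) differentiable (at x)) \<Longrightarrow>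
  deriv (\<lambda>y. f y * g y) = (\<lambda>y. deriv f y * g y + f y * deriv g y)"
proof -
  assume a: "\<And>x. f differentiable (at x)" "\<And>x. g differentiable (at x)"
  have "\<And>x. (f has_real_derivative deriv f x) (at x)" "\<And>x. (g has_real_derivative deriv g x) (at x)"
    using a DERIV_deriv_iff_real_differentiable by blast+
  then show ?thesis by (intro ext DERIV_imp_deriv) (auto intro!: derivative_eq_intros)
qed

lemma G_add0: "G I 0 B f \<Longrightarrow> G I 0 B g \<Longrightarrow> G I 0 B (\<lambda>w y. f w y + g w y)"
proof -
  assume a: "G I 0 B f" "G I 0 B g"
  then obtain C1 C2 where C: "C1 \<ge> 0" "C2 \<ge> 0" "\<forall>w\<in>I. \<forall>y. \<bar>f w y\<bar> \<le> C1 * B w y"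
     "\<forall>w\<in>I. \<forall>y. \<bar>g w y\<bar> \<le> C2 * B w y" unfolding G_0 by blast
  have "\<forall>w\<in>I. \<forall>y. \<bar>f w y + g w y\<bar> \<le> (C1 + C2) * B w y"
  proof (intro ballI allI)
    fix w y assume "w \<in> I"
    then have "\<bar>f w y\<bar> \<le> C1 * B w y" "\<bar>g w y\<bar> \<le> C2 * B w y" using C by auto
    then show "\<bar>f w y + g w y\<bar> \<le> (C1 + C2) * B w y" by (simp add: distrib_right abs_triangle_ineq order_trans[OF abs_triangle_ineq])
  qed
  then show ?thesis using a C unfolding G_0 by (auto intro!: differentiable_add exI[of _ "C1+C2"])
qed

lemma G_add: "G I n B f \<Longrightarrow> G I n B g \<Longrightarrow> G I n B (\<lambda>w y. f w y + g w y)"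
proof (induction n arbitrary: f g)
  case 0
  then show ?case by (rule G_add0)
next
  case (Suc n)
  have d: "G I n B (\<lambda>w y. deriv (f w) y + deriv (g w) y)"
    using Suc.IH Suc.prems unfolding G_Suc by blast
  have "G I n B (\<lambda>w. deriv (\<lambda>y. f w y + g w y))"
    by (rule G_cong[OF d]) (simp add: deriv_add_fun G_diff[OF Suc.prems(1)] G_diff[OF Suc.prems(2)])
  moreover have "G I 0 B (\<lambda>w y. f w y + g w y)" using Suc.prems G_mono G_add0 by (meson le0)
  ultimately show ?case unfolding G_Suc by blast
qed

lemma G_shift: "G I (Suc n) B f \<Longrightarrow> G I n B (\<lambda>w. deriv (f w))"
  using G_Suc by blast

lemma G_mult0: "G I 0 B1 f \<Longrightarrow> G I 0 B2 g \<Longrightarrow> G I 0 (\<lambda>w y. B1 w y * B2 w y) (\<lambda>w y. f w y * g w y)"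
proof -
  assume a: "G I 0 B1 f" "G I 0 B2 g"
  then obtain C1 C2 where C: "C1 \<ge> 0" "C2 \<ge> 0" "\<forall>w\<in>I. \<forall>y. \<bar>f w y\<bar> \<le> C1 * B1 w y"
     "\<forall>w\<in>I. \<forall>y. \<bar>g w y\<bar> \<le> C2 * B2 w y" unfolding G_0 by blast
  have "\<forall>w\<in>I. \<forall>y. \<bar>f w y * g w y\<bar> \<le> (C1 * C2) * (B1 w y * B2 w y)"
  proof (intro ballI allI)
    fix w y assume "w \<in> I"
    then have h: "\<bar>f w y\<bar> \<le> C1 * B1 w y" "\<bar>g w y\<bar> \<le> C2 * B2 w y" using C by auto
    have "\<bar>f w y\<bar> * \<bar>g w y\<bar> \<le> (C1 * B1 w y) * (C2 * B2 w y)"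
      by (rule mult_mono[OF h(1) h(2)]) (use h(1) in auto)
    then show "\<bar>f w y * g w y\<bar> \<le> (C1 * C2) * (B1 w y * B2 w y)" by (simp add: abs_mult mult_ac)
  qed
  then show ?thesis using a C unfolding G_0 by (auto intro!: differentiable_mult exI[of _ "C1*C2"])
qed

lemma G_mult: "G I n B1 f \<Longrightarrow> G I n B2 g \<Longrightarrow> G I n (\<lambda>w y. B1 w y * B2 w y) (\<lambda>w y. f w y * g w y)"
proof (induction n arbitrary: f g)
  case 0
  then show ?case by (rule G_mult0)
next
  case (Suc n)
  have fn: "G I n B1 f" "G I n B2 g" using G_mono[OF Suc.prems(1)] G_mono[OF Suc.prems(2)] by auto
  have d1: "G I n (\<lambda>w y. B1 w y * B2 w y) (\<lambda>w y. deriv (f w) y * g w y)"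
    using Suc.IH[OF G_shift[OF Suc.prems(1)] fn(2)] .
  have d2: "G I n (\<lambda>w y. B1 w y * B2 w y) (\<lambda>w y. f w y * deriv (g w) y)"
    using Suc.IH[OF fn(1) G_shift[OF Suc.prems(2)]] .
  have "G I n (\<lambda>w y. B1 w y * B2 w y) (\<lambda>w. deriv (\<lambda>y. f w y * g w y))"
    by (rule G_cong[OF G_add[OF d1 d2]]) (simp add: deriv_mult_fun G_diff[OF Suc.prems(1)] G_diff[OF Suc.prems(2)])
  moreover have "G I 0 (\<lambda>w y. B1 w y * B2 w y) (\<lambda>w y. f w y * g w y)" using Suc.prems G_mono G_mult0 by (meson le0)
  ultimately show ?case unfolding G_Suc by blast
qed

lemma G_weight: "G I n B f \<Longrightarrow> c \<ge> 0 \<Longrightarrow> (\<And>w y. w \<in> I \<Longrightarrow> B w y \<le> c * B' w y) \<Longrightarrow> G I n B' f"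
  unfolding G_def
proof (elim conjE, intro conjI, assumption, intro allI impI)
  fix j assume a: "\<forall>j\<le>n. \<exists>C\<ge>0. \<forall>w\<in>I. \<forall>y. \<bar>Dk j (f w) y\<bar> \<le> C * B w y" "j \<le> n" "c \<ge> 0"
    and b: "\<And>w y. w \<in> I \<Longrightarrow> B w y \<le> c * B' w y"
  then obtain C where C: "C \<ge> 0" "\<forall>w\<in>I. \<forall>y. \<bar>Dk j (f w) y\<bar> \<le> C * B w y" by blast
  have "\<forall>w\<in>I. \<forall>y. \<bar>Dk j (f w) y\<bar> \<le> (C * c) * B' w y"
  proof (intro ballI allI)
    fix w y assume w: "w \<in> I"
    have "C * B w y \<le> C * (c * B' w y)" by (rule mult_left_mono[OF b[OF w] C(1)])
    moreover have "\<bar>Dk j (f w) y\<bar> \<le> C * B w y" using C(2) w by blast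
    ultimately show "\<bar>Dk j (f w) y\<bar> \<le> (C * c) * B' w y" by (simp add: mult_ac)
  qed
  then show "\<exists>C\<ge>0. \<forall>w\<in>I. \<forall>y. \<bar>Dk j (f w) y\<bar> \<le> C * B' w y" using C(1) a(3) by (intro exI[of _ "C*c"]) auto
qed

lemma Dk_const: "Dk (Suc j) (\<lambda>y. c::real) = (\<lambda>y. 0)"
  by (induction j) (auto simp: Dk_Suc')

lemma G_const: "(\<And>w. w \<in> I \<Longrightarrow> \<bar>c w\<bar> \<le> M) \<Longrightarrow> G I n (\<lambda>w y. 1) (\<lambda>w y. c w)"
  unfolding G_def
proof (intro conjI ballI allI impI)
  fix w j x show "Dk j (\<lambda>y. c w) differentiable (at x)"
    by (cases j) (auto simp: Dk_const)
next
  fix j assume a: "\<And>w. w \<in> I \<Longrightarrow> \<bar>c w\<bar> \<le> M"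
  show "\<exists>C\<ge>0. \<forall>w\<in>I. \<forall>y. \<bar>Dk j (\<lambda>y. c w) y\<bar> \<le> C * 1"
  proof (cases j)
    case 0 then show ?thesis using a by (intro exI[of _ "max M 0"]) force
  qed (auto simp: Dk_const)
qed

lemma G_scale: "G I n B f \<Longrightarrow> G I n B (\<lambda>w y. c * f w y)"
proof -
  assume a: "G I n B f"
  have "G I n (\<lambda>w y. 1 * B w y) (\<lambda>w y. c * f w y)"
    by (rule G_mult[OF G_const[of I "\<lambda>w. c" "\<bar>c\<bar>"] a]) auto
  then show ?thesis by (rule G_weight[of _ _ _ _ 1]) auto
qed

lemma G_sub: "G I n B f \<Longrightarrow> G I n B g \<Longrightarrow> G I n B (\<lambda>w y. f w y - g w y)"
  using G_add[of I n B f "\<lambda>w y. (-1) * g w y"] G_scale[of I n B g "-1"] by simp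

lemma G_smooth: "(\<And>n. G I n B f) \<Longrightarrow> w \<in> I \<Longrightarrow> smooth_fun (f w)"
  unfolding smooth_fun_def G_def by blast

lemma G_bound: "G I k B f \<Longrightarrow> \<exists>C\<ge>0. \<forall>w\<in>I. \<forall>y. \<bar>Dk k (f w) y\<bar> \<le> C * B w y"
  unfolding G_def by blast


definition Ds :: "nat \<Rightarrow> (real \<Rightarrow> real) \<Rightarrow> bool" where
 "Ds n f \<longleftrightarrow> (\<forall>j\<le>n. \<forall>x. Dk j f differentiable (at x))"

lemma Ds_Suc: "Ds (Suc n) f \<longleftrightarrow> (\<forall>x. f differentiable (at x)) \<and> Ds n (deriv f)"
  unfolding Ds_def all_le_Suc Dk_Suc by auto

lemma Ds_mono: "Ds n f \<Longrightarrow> m \<le> n \<Longrightarrow> Ds m f" unfolding Ds_def by auto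

lemma smooth_Ds: "smooth_fun f \<longleftrightarrow> (\<forall>n. Ds n f)" unfolding smooth_fun_def Ds_def by blast

lemma Ds_add: "Ds n f \<Longrightarrow> Ds n g \<Longrightarrow> Ds n (\<lambda>y. f y + g y)"
proof (induction n arbitrary: f g)
  case 0 then show ?case by (auto simp: Ds_def)
next
  case (Suc n)
  then show ?case unfolding Ds_Suc using deriv_add_fun[of f g] by auto
qed

lemma Ds_mult: "Ds n f \<Longrightarrow> Ds n g \<Longrightarrow> Ds n (\<lambda>y. f y * g y)"
proof (induction n arbitrary: f g)
  case 0 then show ?case by (auto simp: Ds_def)
next
  case (Suc n)
  have fn: "Ds n f" "Ds n g" using Suc.prems Ds_mono by auto
  have "Ds n (\<lambda>y. deriv f y * g y + f y * deriv g y)"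
    using Ds_add Suc.IH fn Suc.prems unfolding Ds_Suc by blast
  then show ?case unfolding Ds_Suc using deriv_mult_fun[of f g] Suc.prems unfolding Ds_Suc by auto
qed

lemma Ds_const: "Ds n (\<lambda>y. c)"
  unfolding Ds_def
proof (intro allI impI)
  fix j x show "Dk j (\<lambda>y. c) differentiable (at x)" by (cases j) (simp_all add: Dk_const)
qed

lemma smooth_add[simp]: "smooth_fun f \<Longrightarrow> smooth_fun g \<Longrightarrow> smooth_fun (\<lambda>y. f y + g y)"
  unfolding smooth_Ds using Ds_add by simp
lemma smooth_mult[simp]: "smooth_fun f \<Longrightarrow> smooth_fun g \<Longrightarrow> smooth_fun (\<lambda>y. f y * g y)"
  unfolding smooth_Ds using Ds_mult by simp
lemma smooth_const[simp]: "smooth_fun (\<lambda>y. c)"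
  unfolding smooth_Ds using Ds_const by simp
lemma smooth_cmult[simp]: "smooth_fun f \<Longrightarrow> smooth_fun (\<lambda>y. c * f y)"
  using smooth_mult[of "\<lambda>y. c" f] by simp
lemma smooth_minus[simp]: "smooth_fun f \<Longrightarrow> smooth_fun (\<lambda>y. - f y)"
  using smooth_cmult[of f "-1"] by simp
lemma smooth_diff[simp]: "smooth_fun f \<Longrightarrow> smooth_fun g \<Longrightarrow> smooth_fun (\<lambda>y. f y - g y)"
  using smooth_add[of f "\<lambda>y. - g y"] by simp
lemma smooth_deriv[simp]: "smooth_fun f \<Longrightarrow> smooth_fun (deriv f)"
  unfolding smooth_Ds proof (intro allI)
  fix n assume "\<forall>n. Ds n f" then have "Ds (Suc n) f" by blast
  then show "Ds n (deriv f)" unfolding Ds_Suc by blast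
qed
lemma smooth_differentiable: "smooth_fun f \<Longrightarrow> f differentiable (at x)"
  unfolding smooth_Ds proof -
  assume "\<forall>n. Ds n f" then have "Ds (Suc 0) f" by blast
  then show ?thesis unfolding Ds_Suc by blast
qed

lemma deriv_add_s[simp]: "smooth_fun f \<Longrightarrow> smooth_fun g \<Longrightarrow> deriv (\<lambda>y. f y + g y) = (\<lambda>y. deriv f y + deriv g y)"
  by (intro deriv_add_fun smooth_differentiable)
lemma deriv_mult_s[simp]: "smooth_fun f \<Longrightarrow> smooth_fun g \<Longrightarrow> deriv (\<lambda>y. f y * g y) = (\<lambda>y. deriv f y * g y + f y * deriv g y)"
  by (intro deriv_mult_fun smooth_differentiable)
lemma deriv_const_s[simp]: "deriv (\<lambda>y. c::real) = (\<lambda>y. 0)"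
  using Dk_const[of 0 c] by (simp add: Dk_Suc')
lemma deriv_cmult_s[simp]: "smooth_fun f \<Longrightarrow> deriv (\<lambda>y. c * f y) = (\<lambda>y. c * deriv f y)"
  using deriv_mult_s[of "\<lambda>y. c" f] by simp
lemma deriv_minus_s[simp]: "smooth_fun f \<Longrightarrow> deriv (\<lambda>y. - f y) = (\<lambda>y. - deriv f y)"
  using deriv_cmult_s[of f "-1"] by simp
lemma deriv_diff_s[simp]: "smooth_fun f \<Longrightarrow> smooth_fun g \<Longrightarrow> deriv (\<lambda>y. f y - g y) = (\<lambda>y. deriv f y - deriv g y)"
  using deriv_add_s[of f "\<lambda>y. - g y"] by simp



lemma exp_decay_lim: "(c::real) > 0 \<Longrightarrow> ((\<lambda>y. exp (- c * y)) \<longlongrightarrow> 0) at_top"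
proof -
  assume c: "c > 0"
  have "LIM y at_top. (- c) * y :> at_bot"
    by (rule filterlim_tendsto_neg_mult_at_bot[OF tendsto_const _ filterlim_ident]) (use c in auto)
  then show ?thesis by (intro filterlim_compose[OF exp_at_bot]) simp
qed

lemma tail_bound:
  fixes g g' :: "real \<Rightarrow> real"
  assumes d: "\<And>y. (g has_real_derivative g' y) (at y)" and lim: "(g \<longlongrightarrow> 0) at_top"
    and c: "c > 0" and b: "\<And>y. y \<ge> 0 \<Longrightarrow> \<bar>g' y\<bar> \<le> M * exp (- c * y)" and y: "y \<ge> 0"
  shows "\<bar>g y\<bar> \<le> M / c * exp (- c * y)"
proof -
  have lim2: "((\<lambda>t. M / c * exp (- c * t)) \<longlongrightarrow> 0) at_top"
    using tendsto_mult_right_zero[OF exp_decay_lim[OF c], of "M/c"] by simp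
  have dh: "((\<lambda>t. M / c * exp (- c * t)) has_real_derivative - M * exp (- c * t)) (at t)" for t
    using c by (auto intro!: derivative_eq_intros)
  have up: "g t + M / c * exp (- c * t) \<le> g y + M / c * exp (- c * y)" if "t \<ge> y" for t
  proof (rule DERIV_nonpos_imp_nonincreasing[OF that])
    fix x assume "y \<le> x" "x \<le> t"
    then have "\<bar>g' x\<bar> \<le> M * exp (- c * x)" using b y by auto
    then show "\<exists>z. ((\<lambda>t. g t + M / c * exp (- c * t)) has_real_derivative z) (at x) \<and> z \<le> 0"
      using DERIV_add[OF d dh] by (intro exI[of _ "g' x + - M * exp (- c * x)"]) auto
  qed
  have lo: "g y - M / c * exp (- c * y) \<le> g t - M / c * exp (- c * t)" if "t \<ge> y" for t
  proof (rule DERIV_nonneg_imp_nondecreasing[OF that])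
    fix x assume "y \<le> x" "x \<le> t"
    then have "\<bar>g' x\<bar> \<le> M * exp (- c * x)" using b y by auto
    then show "\<exists>z. ((\<lambda>t. g t - M / c * exp (- c * t)) has_real_derivative z) (at x) \<and> z \<ge> 0"
      using DERIV_diff[OF d dh] by (intro exI[of _ "g' x - - M * exp (- c * x)"]) auto
  qed
  have "0 \<le> g y + M / c * exp (- c * y)"
    by (rule tendsto_upperbound[OF tendsto_add[OF lim lim2, simplified]])
       (use up in \<open>auto simp: eventually_at_top_linorder\<close>)
  moreover have "g y - M / c * exp (- c * y) \<le> 0"
    by (rule tendsto_lowerbound[OF tendsto_diff[OF lim lim2, simplified]])
       (use lo in \<open>auto simp: eventually_at_top_linorder\<close>)
  ultimately show ?thesis by linarith
qed


lemma G_constw: "(\<And>w. w \<in> I \<Longrightarrow> \<bar>c w\<bar> \<le> M * b w) \<Longrightarrow> (\<And>w. w \<in> I \<Longrightarrow> b w \<ge> 0) \<Longrightarrow>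
   G I n (\<lambda>w y. b w) (\<lambda>w y. c w)"
  unfolding G_def
proof (intro conjI ballI allI impI)
  fix w j x show "Dk j (\<lambda>y. c w) differentiable (at x)"
    by (cases j) (auto simp: Dk_const)
next
  fix j assume a: "\<And>w. w \<in> I \<Longrightarrow> \<bar>c w\<bar> \<le> M * b w" and b: "\<And>w. w \<in> I \<Longrightarrow> b w \<ge> 0"
  show "\<exists>C\<ge>0. \<forall>w\<in>I. \<forall>y. \<bar>Dk j (\<lambda>y. c w) y\<bar> \<le> C * b w"
  proof (cases j)
    case 0
    have "\<forall>w\<in>I. \<bar>c w\<bar> \<le> max M 0 * b w"
    proof
      fix w assume w: "w \<in> I"
      have "M * b w \<le> max M 0 * b w" using b[OF w] by (intro mult_right_mono) auto
      then show "\<bar>c w\<bar> \<le> max M 0 * b w" using a[OF w] by linarith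
    qed
    then show ?thesis using 0 by (intro exI[of _ "max M 0"]) auto
  qed (auto simp: Dk_const intro!: exI[of _ 0] b)
qed

lemma diffI: "(f has_real_derivative D) (at x) \<Longrightarrow> f differentiable (at x)"
  by (auto simp: real_differentiable_def)

lemma cosh_le_exp: "cosh (x::real) \<le> exp \<bar>x\<bar>"
proof -
  have "cosh x = cosh \<bar>x\<bar>" by simp
  also have "\<dots> = (exp \<bar>x\<bar> + exp (- \<bar>x\<bar>)) / 2" by (simp add: cosh_field_def)
  also have "\<dots> \<le> exp \<bar>x\<bar>" using exp_le_cancel_iff[of "-\<bar>x\<bar>" "\<bar>x\<bar>"] by simp
  finally show ?thesis .
qed

lemma cosh_ge_exp: "exp \<bar>x\<bar> / 2 \<le> cosh (x::real)"
proof -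
  have "cosh x = cosh \<bar>x\<bar>" by simp
  also have "\<dots> = (exp \<bar>x\<bar> + exp (- \<bar>x\<bar>)) / 2" by (simp add: cosh_field_def)
  finally show ?thesis by (simp add: add_nonneg_nonneg)
qed

lemma abs_sinh_le_exp: "\<bar>sinh (x::real)\<bar> \<le> exp \<bar>x\<bar>"
proof -
  have "\<bar>sinh x\<bar> = sinh \<bar>x\<bar>" by simp
  also have "\<dots> \<le> cosh \<bar>x\<bar>" by (rule sinh_le_cosh_real)
  also have "\<dots> \<le> exp \<bar>x\<bar>" using cosh_le_exp[of "\<bar>x\<bar>"] by simp
  finally show ?thesis .
qed

lemma deriv_sinh2: "deriv (\<lambda>y. sinh (2 * y)) = (\<lambda>y. 2 * cosh (2 * y::real))"
  by (rule ext, rule DERIV_imp_deriv) (auto intro!: derivative_eq_intros)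
lemma deriv_cosh2: "deriv (\<lambda>y. cosh (2 * y)) = (\<lambda>y. 2 * sinh (2 * y::real))"
  by (rule ext, rule DERIV_imp_deriv) (auto intro!: derivative_eq_intros)

lemma G_sinhcosh: "G I n (\<lambda>w y. exp (2 * \<bar>y\<bar>)) (\<lambda>w y. sinh (2 * y)) \<and> G I n (\<lambda>w y. exp (2 * \<bar>y\<bar>)) (\<lambda>w y. cosh (2 * y))"
proof (induction n)
  case 0
  have "\<bar>sinh (2 * y)\<bar> \<le> 1 * exp (2 * \<bar>y\<bar>)" "\<bar>cosh (2 * y)\<bar> \<le> 1 * exp (2 * \<bar>y\<bar>)" for y :: real
    using abs_sinh_le_exp[of "2*y"] cosh_le_exp[of "2*y"] by (auto simp: abs_mult)
  then show ?case unfolding G_0 by (auto intro!: exI[of _ 1] diffI derivative_eq_intros)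
next
  case (Suc n)
  have "\<bar>sinh (2 * y)\<bar> \<le> 1 * exp (2 * \<bar>y\<bar>)" "\<bar>cosh (2 * y)\<bar> \<le> 1 * exp (2 * \<bar>y\<bar>)" for y :: real
    using abs_sinh_le_exp[of "2*y"] cosh_le_exp[of "2*y"] by (auto simp: abs_mult)
  then have g0: "G I 0 (\<lambda>w y. exp (2 * \<bar>y\<bar>)) (\<lambda>w y. sinh (2 * y)) \<and> G I 0 (\<lambda>w y. exp (2 * \<bar>y\<bar>)) (\<lambda>w y. cosh (2 * y))"
    unfolding G_0 by (auto intro!: exI[of _ 1] diffI derivative_eq_intros)
  have "G I n (\<lambda>w y. exp (2 * \<bar>y\<bar>)) (\<lambda>w y. 2 * cosh (2 * y))" "G I n (\<lambda>w y. exp (2 * \<bar>y\<bar>)) (\<lambda>w y. 2 * sinh (2 * y))"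
    using Suc.IH G_scale by auto
  then show ?case using g0 unfolding G_Suc deriv_sinh2 deriv_cosh2 by simp
qed

definition hh :: "real \<Rightarrow> real \<Rightarrow> real" where
  "hh w y = 1 / (1 + a_om w * cosh (2 * y))"

lemma a_om_bounds: "0 \<le> w \<Longrightarrow> w \<le> 1 \<Longrightarrow> 1 \<le> a_om w \<and> a_om w \<le> 3"
proof -
  assume w: "0 \<le> w" "w \<le> 1"
  have "sqrt 1 \<le> sqrt (1 + 16/3 * w)" using w by (intro real_sqrt_le_mono) simp
  moreover have "sqrt (1 + 16/3 * w) \<le> sqrt (3^2)" using w by (intro real_sqrt_le_mono) simp
  ultimately show ?thesis unfolding a_om_def by simp
qed

lemma hh_pos: "0 \<le> w \<Longrightarrow> w \<le> 1 \<Longrightarrow> 0 < 1 + a_om w * cosh (2 * y)"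
  using a_om_bounds[of w] by (smt (verit) cosh_real_pos mult_pos_pos)

lemma deriv_hh: "0 \<le> w \<Longrightarrow> w \<le> 1 \<Longrightarrow>
  deriv (hh w) = (\<lambda>y. (- (2 * a_om w)) * sinh (2 * y) * hh w y * hh w y)"
proof (rule ext, rule DERIV_imp_deriv)
  fix y assume w: "0 \<le> w" "w \<le> 1"
  have p: "1 + a_om w * cosh (2 * y) \<noteq> 0" using hh_pos[OF w, of y] by linarith
  show "(hh w has_real_derivative (- (2 * a_om w)) * sinh (2 * y) * hh w y * hh w y) (at y)"
    unfolding hh_def[abs_def] using p
    by (auto intro!: derivative_eq_intros simp: field_simps power2_eq_square)
qed

lemma hh_bound: "0 \<le> w \<Longrightarrow> w \<le> 1 \<Longrightarrow> \<bar>hh w y\<bar> \<le> 2 * exp (- 2 * \<bar>y\<bar>)"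
proof -
  assume w: "0 \<le> w" "w \<le> 1"
  have a: "1 \<le> a_om w" using a_om_bounds[OF w] by simp
  have c1: "exp (2 * \<bar>y\<bar>) / 2 \<le> cosh (2 * y)" using cosh_ge_exp[of "2*y"] by (simp add: abs_mult)
  have "cosh (2 * y) \<le> a_om w * cosh (2 * y)" using mult_right_mono[OF a cosh_real_nonneg[of "2*y"]] by simp
  then have c2: "exp (2 * \<bar>y\<bar>) / 2 \<le> 1 + a_om w * cosh (2 * y)" using c1 by linarith
  have "hh w y = 1 / (1 + a_om w * cosh (2 * y))" by (simp add: hh_def)
  also have "\<dots> \<le> 1 / (exp (2 * \<bar>y\<bar>) / 2)"
    by (rule divide_left_mono[OF c2]) (use hh_pos[OF w, of y] in auto)
  also have "\<dots> = 2 * exp (- 2 * \<bar>y\<bar>)" by (simp add: exp_minus field_simps)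
  finally show ?thesis using hh_pos[OF w, of y] by (simp add: hh_def)
qed

lemma G_hh0: "(\<And>w. w \<in> I \<Longrightarrow> 0 \<le> w \<and> w \<le> 1) \<Longrightarrow> G I 0 (\<lambda>w y. exp (- 2 * \<bar>y\<bar>)) hh"
proof -
  assume I: "\<And>w. w \<in> I \<Longrightarrow> 0 \<le> w \<and> w \<le> 1"
  have "\<forall>w\<in>I. \<forall>x. hh w differentiable (at x)"
  proof (intro ballI allI)
    fix w x assume "w \<in> I" then have "0 \<le> w" "w \<le> 1" using I by auto
    then have "1 + a_om w * cosh (2 * x) \<noteq> 0" using hh_pos[of w x] by linarith
    then show "hh w differentiable (at x)"
      unfolding hh_def[abs_def] by (auto intro!: diffI derivative_eq_intros)
  qed
  then show ?thesis using I hh_bound unfolding G_0 by (auto intro!: exI[of _ 2])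
qed

lemma G_hh: "(\<And>w. w \<in> I \<Longrightarrow> 0 \<le> w \<and> w \<le> 1) \<Longrightarrow> G I n (\<lambda>w y. exp (- 2 * \<bar>y\<bar>)) hh"
proof (induction n)
  case 0
  then show ?case by (rule G_hh0)
next
  case (Suc n)
  have c: "G I n (\<lambda>w y. 1) (\<lambda>w y. - (2 * a_om w))"
    by (rule G_const[of _ _ 6]) (use Suc.prems a_om_bounds in force)
  have "G I n (\<lambda>w y. 1 * exp (2 * \<bar>y\<bar>) * exp (- 2 * \<bar>y\<bar>) * exp (- 2 * \<bar>y\<bar>))
          (\<lambda>w y. (- (2 * a_om w)) * sinh (2 * y) * hh w y * hh w y)"
    by (rule G_mult[OF G_mult[OF G_mult[OF c G_sinhcosh[THEN conjunct1]] Suc.IH[OF Suc.prems]] Suc.IH[OF Suc.prems]])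
  then have "G I n (\<lambda>w y. exp (- 2 * \<bar>y\<bar>)) (\<lambda>w y. (- (2 * a_om w)) * sinh (2 * y) * hh w y * hh w y)"
    by (rule G_weight[of _ _ _ _ 1]) (auto simp: mult_exp_exp)
  then have "G I n (\<lambda>w y. exp (- 2 * \<bar>y\<bar>)) (\<lambda>w. deriv (hh w))"
    by (rule G_cong) (use Suc.prems deriv_hh in auto)
  then show ?case using G_hh0[OF Suc.prems] unfolding G_Suc by blast
qed

lemma Q4_eq: "0 \<le> w \<Longrightarrow> w \<le> 1 \<Longrightarrow> Q_om w y ^ 4 = 16 * (hh w y * hh w y)"
proof -
  assume w: "0 \<le> w" "w \<le> 1"
  have p: "0 \<le> 4 / (1 + a_om w * cosh (2 * y))" using hh_pos[OF w, of y] by simp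
  have "Q_om w y ^ 4 = (sqrt (4 / (1 + a_om w * cosh (2 * y))) ^ 2) ^ 2" by (simp add: Q_om_def power_mult[symmetric])
  also have "\<dots> = (4 / (1 + a_om w * cosh (2 * y))) ^ 2" using p by simp
  also have "\<dots> = 16 * (hh w y * hh w y)" by (simp add: hh_def power2_eq_square)
  finally show ?thesis .
qed

lemma G_Q4: "(\<And>w. w \<in> I \<Longrightarrow> 0 \<le> w \<and> w \<le> 1) \<Longrightarrow> G I n (\<lambda>w y. exp (- 4 * \<bar>y\<bar>)) (\<lambda>w y. Q_om w y ^ 4)"
proof -
  assume I: "\<And>w. w \<in> I \<Longrightarrow> 0 \<le> w \<and> w \<le> 1"
  have "G I n (\<lambda>w y. exp (- 2 * \<bar>y\<bar>) * exp (- 2 * \<bar>y\<bar>)) (\<lambda>w y. hh w y * hh w y)"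
    by (rule G_mult[OF G_hh[OF I] G_hh[OF I]])
  then have "G I n (\<lambda>w y. exp (- 2 * \<bar>y\<bar>) * exp (- 2 * \<bar>y\<bar>)) (\<lambda>w y. 16 * (hh w y * hh w y))"
    by (rule G_scale)
  then have "G I n (\<lambda>w y. exp (- 4 * \<bar>y\<bar>)) (\<lambda>w y. 16 * (hh w y * hh w y))"
    by (rule G_weight[of _ _ _ _ 1]) (auto simp: mult_exp_exp)
  then show ?thesis by (rule G_cong) (use I Q4_eq in auto)
qed


definition EE :: "(real \<Rightarrow> real) \<Rightarrow> real \<Rightarrow> real \<Rightarrow> real" where
  "EE \<alpha> w y = w * exp (- (sqrt (2 - (\<alpha> w)\<^sup>2) - \<alpha> w) * \<bar>y\<bar>)"

definition qf :: "(real \<Rightarrow> real \<Rightarrow> real) \<Rightarrow> real \<Rightarrow> real \<Rightarrow> real" where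
  "qf W w y = deriv (W w) y / W w y"
definition Nf :: "real \<Rightarrow> real \<Rightarrow> real" where
  "Nf w y = - w * Q_om w y ^ 4"
definition Pf :: "real \<Rightarrow> real \<Rightarrow> real" where
  "Pf w y = w / 3 * Q_om w y ^ 4"

locale setting =
  fixes I :: "real set" and \<alpha> :: "real \<Rightarrow> real" and W1 W2 :: "real \<Rightarrow> real \<Rightarrow> real"
  assumes wI: "\<And>w. w \<in> I \<Longrightarrow> 0 < w \<and> w \<le> 1"
  and \<alpha>I: "\<And>w. w \<in> I \<Longrightarrow> 0 < \<alpha> w \<and> \<alpha> w \<le> 1"
  and sm1: "\<And>w k x. w \<in> I \<Longrightarrow> Dk k (W1 w) differentiable (at x)"
  and sm2: "\<And>w k x. w \<in> I \<Longrightarrow> Dk k (W2 w) differentiable (at x)"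
  and Wlow: "\<And>w y. w \<in> I \<Longrightarrow> exp (- \<alpha> w * \<bar>y\<bar>) / 2 \<le> W2 w y"
  and eq1: "\<And>w y. w \<in> I \<Longrightarrow> Mplus w (W1 w) y = (1 - (\<alpha> w)\<^sup>2) * W2 w y"
  and eq2: "\<And>w y. w \<in> I \<Longrightarrow> Mminus w (W2 w) y = (1 - (\<alpha> w)\<^sup>2) * W1 w y"
  and bd1: "\<And>k. \<exists>C. \<forall>w\<in>I. \<forall>y.
                \<bar>Dk k (W1 w) y\<bar> \<le> C * (w ^ k * exp (- \<alpha> w * \<bar>y\<bar>) + w * exp (- \<bar>y\<bar>)) \<and>
                \<bar>Dk k (W2 w) y\<bar> \<le> C * (w ^ k * exp (- \<alpha> w * \<bar>y\<bar>) + w * exp (- \<bar>y\<bar>))"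
  and bd2: "\<And>k. \<exists>C. \<forall>w\<in>I. \<forall>y.
                \<bar>Dk k (\<lambda>y. W1 w y - W2 w y) y\<bar> \<le> C * w * exp (- sqrt (2 - (\<alpha> w)\<^sup>2) * \<bar>y\<bar>)"
begin

lemma kap: "w \<in> I \<Longrightarrow> 1 \<le> sqrt (2 - (\<alpha> w)\<^sup>2) \<and> sqrt (2 - (\<alpha> w)\<^sup>2) \<le> 2"
proof -
  assume w: "w \<in> I"
  then have a: "0 < \<alpha> w" "\<alpha> w \<le> 1" using \<alpha>I by auto
  have "(\<alpha> w)\<^sup>2 \<le> 1" using a by (simp add: power_le_one)
  then have "sqrt 1 \<le> sqrt (2 - (\<alpha> w)\<^sup>2)" by (intro real_sqrt_le_mono) simp
  moreover have "sqrt (2 - (\<alpha> w)\<^sup>2) \<le> 2"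
  proof (intro real_le_lsqrt)
    have "0 \<le> (\<alpha> w)\<^sup>2" by simp
    moreover have "(2::real)\<^sup>2 = 4" by simp
    ultimately show "2 - (\<alpha> w)\<^sup>2 \<le> 2\<^sup>2" by linarith
  qed simp
  ultimately show ?thesis by simp
qed

lemma W_bound_weight: "w \<in> I \<Longrightarrow> w ^ k * exp (- \<alpha> w * \<bar>y\<bar>) + w * exp (- \<bar>y\<bar>) \<le> 2 * exp (- \<alpha> w * \<bar>y\<bar>)"
proof -
  assume w: "w \<in> I"
  then have a: "0 < w" "w \<le> 1" "0 < \<alpha> w" "\<alpha> w \<le> 1" using wI \<alpha>I by auto
  have "w ^ k \<le> 1" using a by (simp add: power_le_one)
  then have 1: "w ^ k * exp (- \<alpha> w * \<bar>y\<bar>) \<le> exp (- \<alpha> w * \<bar>y\<bar>)" by (simp add: mult_left_le_one_le)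
  have e: "exp (- \<bar>y\<bar>) \<le> exp (- \<alpha> w * \<bar>y\<bar>)" using a by (simp add: mult_left_le_one_le)
  have "w * exp (- \<bar>y\<bar>) \<le> exp (- \<bar>y\<bar>)" using a by (intro mult_left_le_one_le) auto
  then have 2: "w * exp (- \<bar>y\<bar>) \<le> exp (- \<alpha> w * \<bar>y\<bar>)" using e by linarith
  show ?thesis using 1 2 by linarith
qed

lemma G_W: "G I n (\<lambda>w y. exp (- \<alpha> w * \<bar>y\<bar>)) W1 \<and> G I n (\<lambda>w y. exp (- \<alpha> w * \<bar>y\<bar>)) W2"
  unfolding G_def
proof (intro conjI ballI allI impI)
  fix j
  obtain C where C: "\<forall>w\<in>I. \<forall>y.
                \<bar>Dk j (W1 w) y\<bar> \<le> C * (w ^ j * exp (- \<alpha> w * \<bar>y\<bar>) + w * exp (- \<bar>y\<bar>)) \<and>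
                \<bar>Dk j (W2 w) y\<bar> \<le> C * (w ^ j * exp (- \<alpha> w * \<bar>y\<bar>) + w * exp (- \<bar>y\<bar>))" using bd1 by blast
  have *: "C * (w ^ j * exp (- \<alpha> w * \<bar>y\<bar>) + w * exp (- \<bar>y\<bar>)) \<le> (2 * \<bar>C\<bar>) * exp (- \<alpha> w * \<bar>y\<bar>)"
    if w: "w \<in> I" for w y
  proof -
    have p: "0 \<le> w ^ j * exp (- \<alpha> w * \<bar>y\<bar>) + w * exp (- \<bar>y\<bar>)" using wI[OF w] by simp
    have "C * (w ^ j * exp (- \<alpha> w * \<bar>y\<bar>) + w * exp (- \<bar>y\<bar>)) \<le> \<bar>C\<bar> * (w ^ j * exp (- \<alpha> w * \<bar>y\<bar>) + w * exp (- \<bar>y\<bar>))"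
      using p by (intro mult_right_mono) auto
    also have "\<dots> \<le> \<bar>C\<bar> * (2 * exp (- \<alpha> w * \<bar>y\<bar>))" by (intro mult_left_mono W_bound_weight w) simp
    finally show ?thesis by simp
  qed
  show "\<exists>C\<ge>0. \<forall>w\<in>I. \<forall>y. \<bar>Dk j (W1 w) y\<bar> \<le> C * exp (- \<alpha> w * \<bar>y\<bar>)"
  proof (intro exI[of _ "2 * \<bar>C\<bar>"] conjI ballI allI)
    fix w y assume w: "w \<in> I"
    show "\<bar>Dk j (W1 w) y\<bar> \<le> 2 * \<bar>C\<bar> * exp (- \<alpha> w * \<bar>y\<bar>)"
    proof -
      have "\<bar>Dk j (W1 w) y\<bar> \<le> C * (w ^ j * exp (- \<alpha> w * \<bar>y\<bar>) + w * exp (- \<bar>y\<bar>))" using C w by blast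
      then show ?thesis using *[OF w, of y] by linarith
    qed
  qed simp
  show "\<exists>C\<ge>0. \<forall>w\<in>I. \<forall>y. \<bar>Dk j (W2 w) y\<bar> \<le> C * exp (- \<alpha> w * \<bar>y\<bar>)"
  proof (intro exI[of _ "2 * \<bar>C\<bar>"] conjI ballI allI)
    fix w y assume w: "w \<in> I"
    show "\<bar>Dk j (W2 w) y\<bar> \<le> 2 * \<bar>C\<bar> * exp (- \<alpha> w * \<bar>y\<bar>)"
    proof -
      have "\<bar>Dk j (W2 w) y\<bar> \<le> C * (w ^ j * exp (- \<alpha> w * \<bar>y\<bar>) + w * exp (- \<bar>y\<bar>))" using C w by blast
      then show ?thesis using *[OF w, of y] by linarith
    qed
  qed simp
qed (use sm1 sm2 in auto)

lemma G_D: "G I n (\<lambda>w y. w * exp (- sqrt (2 - (\<alpha> w)\<^sup>2) * \<bar>y\<bar>)) (\<lambda>w y. W1 w y - W2 w y)"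
proof -
  have g: "G I n (\<lambda>w y. exp (- \<alpha> w * \<bar>y\<bar>)) (\<lambda>w y. W1 w y - W2 w y)"
    using G_sub G_W by blast
  show ?thesis unfolding G_def
  proof (intro conjI ballI allI impI)
    fix w j x assume "w \<in> I" "j \<le> n"
    then show "Dk j (\<lambda>y. W1 w y - W2 w y) differentiable at x" using g unfolding G_def by blast
  next
    fix j
    obtain C where C: "\<forall>w\<in>I. \<forall>y.
                \<bar>Dk j (\<lambda>y. W1 w y - W2 w y) y\<bar> \<le> C * w * exp (- sqrt (2 - (\<alpha> w)\<^sup>2) * \<bar>y\<bar>)" using bd2 by blast
    have *: "C * w * exp (- sqrt (2 - (\<alpha> w)\<^sup>2) * \<bar>y\<bar>) \<le> \<bar>C\<bar> * (w * exp (- sqrt (2 - (\<alpha> w)\<^sup>2) * \<bar>y\<bar>))"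
      if "w \<in> I" for w y using wI[OF that] by (simp add: mult.assoc mult_right_mono)
    show "\<exists>C\<ge>0. \<forall>w\<in>I. \<forall>y. \<bar>Dk j (\<lambda>y. W1 w y - W2 w y) y\<bar> \<le> C * (w * exp (- sqrt (2 - (\<alpha> w)\<^sup>2) * \<bar>y\<bar>))"
    proof (intro exI[of _ "\<bar>C\<bar>"] conjI ballI allI)
      fix w y assume w: "w \<in> I"
      show "\<bar>Dk j (\<lambda>y. W1 w y - W2 w y) y\<bar> \<le> \<bar>C\<bar> * (w * exp (- sqrt (2 - (\<alpha> w)\<^sup>2) * \<bar>y\<bar>))"
      proof -
        have "\<bar>Dk j (\<lambda>y. W1 w y - W2 w y) y\<bar> \<le> C * w * exp (- sqrt (2 - (\<alpha> w)\<^sup>2) * \<bar>y\<bar>)" using C w by blast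
        then show ?thesis using *[OF w, of y] by linarith
      qed
    qed simp
  qed
qed

lemma W2_pos: "w \<in> I \<Longrightarrow> 0 < W2 w y"
proof -
  assume w: "w \<in> I"
  show ?thesis using Wlow[OF w, of y] exp_gt_zero[of "- \<alpha> w * \<bar>y\<bar>"] by linarith
qed

lemma G_invW0: "G I 0 (\<lambda>w y. exp (\<alpha> w * \<bar>y\<bar>)) (\<lambda>w y. 1 / W2 w y)"
  unfolding G_0
proof (intro conjI ballI allI exI[of _ 2])
  fix w x assume w: "w \<in> I"
  show "(\<lambda>y. 1 / W2 w y) differentiable at x"
    using sm2[OF w, of 0 x] W2_pos[OF w, of x]
    by (auto elim!: real_differentiableE intro!: diffI derivative_eq_intros)
next
  fix w y assume w: "w \<in> I"
  have "1 / W2 w y \<le> 1 / (exp (- \<alpha> w * \<bar>y\<bar>) / 2)"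
    by (rule divide_left_mono[OF Wlow[OF w]]) (use W2_pos[OF w] in auto)
  also have "\<dots> = 2 * exp (\<alpha> w * \<bar>y\<bar>)" by (simp add: exp_minus field_simps)
  finally show "\<bar>1 / W2 w y\<bar> \<le> 2 * exp (\<alpha> w * \<bar>y\<bar>)" using W2_pos[OF w, of y] by simp
qed simp

end


context setting begin

lemma W2_deriv: "w \<in> I \<Longrightarrow> (W2 w has_real_derivative deriv (W2 w) y) (at y)"
  using sm2[of w 0 y] DERIV_deriv_iff_real_differentiable by simp

lemma deriv_invW: "w \<in> I \<Longrightarrow> deriv (\<lambda>y. 1 / W2 w y) = (\<lambda>y. (-1) * deriv (W2 w) y * (1 / W2 w y) * (1 / W2 w y))"
proof (rule ext, rule DERIV_imp_deriv)
  fix y assume w: "w \<in> I"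
  have "W2 w y \<noteq> 0" using W2_pos[OF w] by (metis less_irrefl)
  then show "((\<lambda>y. 1 / W2 w y) has_real_derivative (-1) * deriv (W2 w) y * (1 / W2 w y) * (1 / W2 w y)) (at y)"
    using W2_deriv[OF w, of y] by (auto intro!: derivative_eq_intros simp: field_simps power2_eq_square)
qed

lemma G_invW: "G I n (\<lambda>w y. exp (\<alpha> w * \<bar>y\<bar>)) (\<lambda>w y. 1 / W2 w y)"
proof (induction n)
  case 0 then show ?case by (rule G_invW0)
next
  case (Suc n)
  have d: "G I n (\<lambda>w y. exp (- \<alpha> w * \<bar>y\<bar>)) (\<lambda>w. deriv (W2 w))"
    using G_W[of "Suc n"] G_shift by blast
  have "G I n (\<lambda>w y. exp (- \<alpha> w * \<bar>y\<bar>) * exp (\<alpha> w * \<bar>y\<bar>) * exp (\<alpha> w * \<bar>y\<bar>))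
      (\<lambda>w y. (-1) * deriv (W2 w) y * (1 / W2 w y) * (1 / W2 w y))"
    using G_mult[OF G_mult[OF G_scale[OF d, of "-1"] Suc.IH] Suc.IH] by simp
  then have "G I n (\<lambda>w y. exp (\<alpha> w * \<bar>y\<bar>)) (\<lambda>w y. (-1) * deriv (W2 w) y * (1 / W2 w y) * (1 / W2 w y))"
    by (rule G_weight[of _ _ _ _ 1]) (simp_all add: mult_exp_exp)
  then have "G I n (\<lambda>w y. exp (\<alpha> w * \<bar>y\<bar>)) (\<lambda>w. deriv (\<lambda>y. 1 / W2 w y))"
    by (rule G_cong) (simp add: deriv_invW)
  then show ?case using G_invW0 unfolding G_Suc by blast
qed

lemma G_q: "G I n (\<lambda>w y. 1) (qf W2)"
proof -
  have d: "G I n (\<lambda>w y. exp (- \<alpha> w * \<bar>y\<bar>)) (\<lambda>w. deriv (W2 w))"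
    using G_W[of "Suc n"] G_shift by blast
  have "G I n (\<lambda>w y. exp (- \<alpha> w * \<bar>y\<bar>) * exp (\<alpha> w * \<bar>y\<bar>)) (\<lambda>w y. deriv (W2 w) y * (1 / W2 w y))"
    by (rule G_mult[OF d G_invW])
  then have "G I n (\<lambda>w y. 1) (\<lambda>w y. deriv (W2 w) y * (1 / W2 w y))"
    by (rule G_weight[of _ _ _ _ 1]) (simp_all add: mult_exp_exp)
  then show ?thesis by (rule G_cong) (simp add: qf_def[abs_def])
qed

definition DW :: "real \<Rightarrow> real \<Rightarrow> real" where
  "DW w y = (W1 w y - W2 w y) * (1 / W2 w y)"

lemma G_DW: "G I n (EE \<alpha>) DW"
proof -
  have "G I n (\<lambda>w y. w * exp (- sqrt (2 - (\<alpha> w)\<^sup>2) * \<bar>y\<bar>) * exp (\<alpha> w * \<bar>y\<bar>)) (\<lambda>w y. (W1 w y - W2 w y) * (1 / W2 w y))"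
    by (rule G_mult[OF G_D G_invW])
  then have "G I n (EE \<alpha>) (\<lambda>w y. (W1 w y - W2 w y) * (1 / W2 w y))"
    by (rule G_weight[of _ _ _ _ 1]) (simp_all add: mult_exp_exp EE_def algebra_simps)
  then show ?thesis by (rule G_cong) (simp add: DW_def[abs_def])
qed

lemma EE_nonneg: "w \<in> I \<Longrightarrow> 0 \<le> EE \<alpha> w y"
proof -
  assume w: "w \<in> I"
  show ?thesis using wI[OF w] unfolding EE_def by (intro mult_nonneg_nonneg) auto
qed

lemma EE_le1: "w \<in> I \<Longrightarrow> EE \<alpha> w y \<le> 1"
proof -
  assume w: "w \<in> I"
  have "\<alpha> w \<le> sqrt (2 - (\<alpha> w)\<^sup>2)" using kap[OF w] \<alpha>I[OF w] by linarith
  then have "- (sqrt (2 - (\<alpha> w)\<^sup>2) - \<alpha> w) * \<bar>y\<bar> \<le> 0"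
    by (intro mult_nonpos_nonneg) auto
  then have "exp (- (sqrt (2 - (\<alpha> w)\<^sup>2) - \<alpha> w) * \<bar>y\<bar>) \<le> 1"
    by simp
  then show ?thesis using wI[OF w] unfolding EE_def by (simp add: mult_le_one)
qed

lemma exp4_le: "w \<in> I \<Longrightarrow> w * exp (- 4 * \<bar>y\<bar>) \<le> 1 * EE \<alpha> w y"
proof -
  assume w: "w \<in> I"
  have "sqrt (2 - (\<alpha> w)\<^sup>2) - \<alpha> w \<le> 4" using kap[OF w] \<alpha>I[OF w] by linarith
  then have "- 4 * \<bar>y\<bar> \<le> - (sqrt (2 - (\<alpha> w)\<^sup>2) - \<alpha> w) * \<bar>y\<bar>"
    by (intro mult_right_mono) auto
  then show ?thesis using wI[OF w] unfolding EE_def by (simp add: mult_left_mono)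
qed

lemma G_N: "G I n (EE \<alpha>) Nf"
proof -
  have I01: "\<And>w. w \<in> I \<Longrightarrow> 0 \<le> w \<and> w \<le> 1" using wI by force
  have "G I n (\<lambda>w y. w * exp (- 4 * \<bar>y\<bar>)) (\<lambda>w y. (- w) * Q_om w y ^ 4)"
  proof -
    have c: "G I n (\<lambda>w y. w) (\<lambda>w y. - w)" by (rule G_constw[of I "\<lambda>w. - w" 1 "\<lambda>w. w"]) (use wI in force)+
    show ?thesis by (rule G_mult[OF c G_Q4[OF I01]])
  qed
  then have "G I n (EE \<alpha>) (\<lambda>w y. (- w) * Q_om w y ^ 4)"
    by (rule G_weight[of _ _ _ _ 1]) (use exp4_le in simp_all)
  then show ?thesis by (rule G_cong) (simp add: Nf_def[abs_def])
qed

lemma G_P: "G I n (EE \<alpha>) Pf"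
proof -
  have I01: "\<And>w. w \<in> I \<Longrightarrow> 0 \<le> w \<and> w \<le> 1" using wI by force
  have "G I n (\<lambda>w y. w * exp (- 4 * \<bar>y\<bar>)) (\<lambda>w y. (w / 3) * Q_om w y ^ 4)"
  proof -
    have c: "G I n (\<lambda>w y. w) (\<lambda>w y. w / 3)" by (rule G_constw[of I "\<lambda>w. w / 3" 1 "\<lambda>w. w"]) (use wI in force)+
    show ?thesis by (rule G_mult[OF c G_Q4[OF I01]])
  qed
  then have "G I n (EE \<alpha>) (\<lambda>w y. (w / 3) * Q_om w y ^ 4)"
    by (rule G_weight[of _ _ _ _ 1]) (use exp4_le in simp_all)
  then show ?thesis by (rule G_cong) (simp add: Pf_def[abs_def])
qed

end


context setting begin

lemma W2_dd: "w \<in> I \<Longrightarrow> deriv (deriv (W2 w)) y = W2 w y + Nf w y * W2 w y - (1 - (\<alpha> w)\<^sup>2) * W1 w y"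
  using eq2[of w y] unfolding Mminus_def Nf_def Dk_2 by (simp add: algebra_simps)

lemma W2'_deriv: "w \<in> I \<Longrightarrow> (deriv (W2 w) has_real_derivative deriv (deriv (W2 w)) y) (at y)"
proof -
  assume w: "w \<in> I"
  have "deriv (W2 w) differentiable (at y)" using sm2[OF w, of 1 y] unfolding Dk_1 .
  then show ?thesis by (simp add: DERIV_deriv_iff_real_differentiable)
qed

definition Ew :: "real \<Rightarrow> real \<Rightarrow> real" where
  "Ew w y = (deriv (W2 w) y)\<^sup>2 - (\<alpha> w)\<^sup>2 * (W2 w y)\<^sup>2"

definition Ew' :: "real \<Rightarrow> real \<Rightarrow> real" where
  "Ew' w y = 2 * deriv (W2 w) y * (Nf w y * W2 w y - (1 - (\<alpha> w)\<^sup>2) * (W1 w y - W2 w y))"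

lemma Ew_deriv: "w \<in> I \<Longrightarrow> (Ew w has_real_derivative Ew' w y) (at y)"
proof -
  assume w: "w \<in> I"
  have "(Ew w has_real_derivative (2 * deriv (W2 w) y * deriv (deriv (W2 w)) y - (\<alpha> w)\<^sup>2 * (2 * W2 w y * deriv (W2 w) y))) (at y)"
    unfolding Ew_def[abs_def] using W2_deriv[OF w, of y] W2'_deriv[OF w, of y]
    by (auto intro!: derivative_eq_intros)
  moreover have "2 * deriv (W2 w) y * deriv (deriv (W2 w)) y - (\<alpha> w)\<^sup>2 * (2 * W2 w y * deriv (W2 w) y) = Ew' w y"
    unfolding W2_dd[OF w] Ew'_def by (simp add: algebra_simps)
  ultimately show ?thesis by simp
qed

lemma Ew'_bound: "\<exists>M\<ge>0. \<forall>w\<in>I. \<forall>y. \<bar>Ew' w y\<bar> \<le> M * w * exp (- (\<alpha> w + sqrt (2 - (\<alpha> w)\<^sup>2)) * \<bar>y\<bar>)"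
proof -
  obtain C1 where C1: "C1 \<ge> 0" "\<forall>w\<in>I. \<forall>y. \<bar>Dk 1 (W2 w) y\<bar> \<le> C1 * exp (- \<alpha> w * \<bar>y\<bar>)"
    using G_bound[OF G_W[THEN conjunct2]] by blast
  obtain C0 where C0: "C0 \<ge> 0" "\<forall>w\<in>I. \<forall>y. \<bar>Dk 0 (W2 w) y\<bar> \<le> C0 * exp (- \<alpha> w * \<bar>y\<bar>)"
    using G_bound[OF G_W[THEN conjunct2]] by blast
  obtain CN where CN: "CN \<ge> 0" "\<forall>w\<in>I. \<forall>y. \<bar>Dk 0 (Nf w) y\<bar> \<le> CN * EE \<alpha> w y"
    using G_bound[OF G_N] by blast
  obtain CD where CD: "CD \<ge> 0" "\<forall>w\<in>I. \<forall>y. \<bar>Dk 0 (\<lambda>y. W1 w y - W2 w y) y\<bar> \<le> CD * (w * exp (- sqrt (2 - (\<alpha> w)\<^sup>2) * \<bar>y\<bar>))"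
    using G_bound[OF G_D] by blast
  show ?thesis
  proof (intro exI[of _ "2 * C1 * (CN * C0 + CD)"] conjI ballI allI)
    show "0 \<le> 2 * C1 * (CN * C0 + CD)" using C1 C0 CN CD by simp
  next
    fix w y assume w: "w \<in> I"
    define ea where "ea = exp (- \<alpha> w * \<bar>y\<bar>)"
    define ek where "ek = exp (- sqrt (2 - (\<alpha> w)\<^sup>2) * \<bar>y\<bar>)"
    define l where "l = 1 - (\<alpha> w)\<^sup>2"
    have l: "0 \<le> l" "l \<le> 1" using \<alpha>I[OF w] unfolding l_def by (auto simp: power_le_one)
    have b1: "\<bar>deriv (W2 w) y\<bar> \<le> C1 * ea" using C1 w unfolding ea_def Dk_1 by blast
    have b0: "\<bar>W2 w y\<bar> \<le> C0 * ea" using C0 w unfolding ea_def by simp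
    have bN: "\<bar>Nf w y\<bar> \<le> CN * EE \<alpha> w y" using CN w by simp
    have bD: "\<bar>W1 w y - W2 w y\<bar> \<le> CD * (w * ek)" using CD w unfolding ek_def by simp
    have EEea: "EE \<alpha> w y * ea = w * ek" unfolding EE_def ea_def ek_def by (simp add: mult_exp_exp algebra_simps)
    have "\<bar>Nf w y * W2 w y\<bar> \<le> (CN * EE \<alpha> w y) * (C0 * ea)"
      unfolding abs_mult by (intro mult_mono bN b0) (use CN EE_nonneg[OF w] in auto)
    also have "\<dots> = CN * C0 * (w * ek)" using EEea by (simp add: algebra_simps)
    finally have 1: "\<bar>Nf w y * W2 w y\<bar> \<le> CN * C0 * (w * ek)" .
    have "\<bar>l * (W1 w y - W2 w y)\<bar> \<le> 1 * (CD * (w * ek))"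
      unfolding abs_mult by (intro mult_mono bD) (use l in auto)
    then have 2: "\<bar>Nf w y * W2 w y - l * (W1 w y - W2 w y)\<bar> \<le> (CN * C0 + CD) * (w * ek)"
      using 1 by (simp add: algebra_simps)
    have "\<bar>Ew' w y\<bar> = 2 * \<bar>deriv (W2 w) y\<bar> * \<bar>Nf w y * W2 w y - l * (W1 w y - W2 w y)\<bar>"
      unfolding Ew'_def l_def by (simp add: abs_mult)
    also have "\<dots> \<le> 2 * (C1 * ea) * ((CN * C0 + CD) * (w * ek))"
      by (intro mult_mono mult_left_mono b1 2) (use C1 in \<open>auto simp: ea_def\<close>)
    also have "\<dots> = 2 * C1 * (CN * C0 + CD) * w * (ea * ek)" by (simp add: algebra_simps)
    also have "ea * ek = exp (- (\<alpha> w + sqrt (2 - (\<alpha> w)\<^sup>2)) * \<bar>y\<bar>)"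
      unfolding ea_def ek_def by (simp add: mult_exp_exp algebra_simps)
    finally show "\<bar>Ew' w y\<bar> \<le> 2 * C1 * (CN * C0 + CD) * w * exp (- (\<alpha> w + sqrt (2 - (\<alpha> w)\<^sup>2)) * \<bar>y\<bar>)" .
  qed
qed

lemma Ew_small: "w \<in> I \<Longrightarrow> \<exists>K. \<forall>y. \<bar>Ew w y\<bar> \<le> K * exp (- (2 * \<alpha> w) * \<bar>y\<bar>)"
proof -
  assume w: "w \<in> I"
  obtain C1 where C1: "C1 \<ge> 0" "\<forall>w\<in>I. \<forall>y. \<bar>Dk 1 (W2 w) y\<bar> \<le> C1 * exp (- \<alpha> w * \<bar>y\<bar>)"
    using G_bound[OF G_W[THEN conjunct2]] by blast
  obtain C0 where C0: "C0 \<ge> 0" "\<forall>w\<in>I. \<forall>y. \<bar>Dk 0 (W2 w) y\<bar> \<le> C0 * exp (- \<alpha> w * \<bar>y\<bar>)"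
    using G_bound[OF G_W[THEN conjunct2]] by blast
  show ?thesis
  proof (intro exI[of _ "C1^2 + (\<alpha> w)\<^sup>2 * C0^2"] allI)
    fix y
    define ea where "ea = exp (- \<alpha> w * \<bar>y\<bar>)"
    have b1: "\<bar>deriv (W2 w) y\<bar> \<le> C1 * ea" using C1 w unfolding ea_def Dk_1 by blast
    have b0: "\<bar>W2 w y\<bar> \<le> C0 * ea" using C0 w unfolding ea_def by simp
    have s1: "(deriv (W2 w) y)\<^sup>2 \<le> (C1 * ea)\<^sup>2" using power_mono[OF b1 abs_ge_zero, of 2] by simp
    have s0: "(W2 w y)\<^sup>2 \<le> (C0 * ea)\<^sup>2" using power_mono[OF b0 abs_ge_zero, of 2] by simp
    have "0 \<le> (\<alpha> w)\<^sup>2 * (W2 w y)\<^sup>2" "0 \<le> (deriv (W2 w) y)\<^sup>2" by simp_all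
    then have "\<bar>Ew w y\<bar> \<le> (deriv (W2 w) y)\<^sup>2 + (\<alpha> w)\<^sup>2 * (W2 w y)\<^sup>2" unfolding Ew_def by linarith
    also have "\<dots> \<le> (C1 * ea)\<^sup>2 + (\<alpha> w)\<^sup>2 * (C0 * ea)\<^sup>2"
      using s1 s0 by (intro add_mono mult_left_mono) auto
    also have "\<dots> = (C1^2 + (\<alpha> w)\<^sup>2 * C0^2) * ea\<^sup>2" by (simp add: algebra_simps power_mult_distrib)
    also have "ea\<^sup>2 = exp (- (2 * \<alpha> w) * \<bar>y\<bar>)" unfolding ea_def power2_eq_square mult_exp_exp by simp
    finally show "\<bar>Ew w y\<bar> \<le> (C1^2 + (\<alpha> w)\<^sup>2 * C0^2) * exp (- (2 * \<alpha> w) * \<bar>y\<bar>)" .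
  qed
qed

end


lemma lim_from_bound:
  fixes g :: "real \<Rightarrow> real"
  assumes "\<And>y. \<bar>g y\<bar> \<le> K * exp (- a * \<bar>y\<bar>)" "a > 0"
  shows "(g \<longlongrightarrow> 0) at_top"
proof (rule Lim_null_comparison)
  show "\<forall>\<^sub>F x in at_top. norm (g x) \<le> K * exp (- a * x)"
    unfolding eventually_at_top_linorder
  proof (intro exI[of _ 0] allI impI)
    fix n :: real assume "n \<ge> 0"
    then show "norm (g n) \<le> K * exp (- a * n)" using assms(1)[of n] by simp
  qed
  show "((\<lambda>x. K * exp (- a * x)) \<longlongrightarrow> 0) at_top"
    using tendsto_mult_right_zero[OF exp_decay_lim[OF assms(2)], of K] by simp
qed

lemma tail_both:
  fixes g g' :: "real \<Rightarrow> real"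
  assumes d: "\<And>y. (g has_real_derivative g' y) (at y)"
    and gb: "\<And>y. \<bar>g y\<bar> \<le> K * exp (- a * \<bar>y\<bar>)" and a: "a > 0"
    and c: "c \<ge> 1" and M: "M \<ge> 0" and b: "\<And>y. \<bar>g' y\<bar> \<le> M * exp (- c * \<bar>y\<bar>)"
  shows "\<bar>g y\<bar> \<le> M * exp (- c * \<bar>y\<bar>)"
proof -
  have cM: "M / c * exp (- c * t) \<le> M * exp (- c * t)" for t
  proof -
    have "M / c \<le> M / 1" by (rule divide_left_mono) (use c M in auto)
    then show ?thesis by (intro mult_right_mono) auto
  qed
  show ?thesis
  proof (cases "y \<ge> 0")
    case True
    have "\<bar>g y\<bar> \<le> M / c * exp (- c * y)"
    proof (rule tail_bound[OF d lim_from_bound[OF gb a] _ _ True])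
      show "0 < c" using c by simp
      fix t :: real assume "0 \<le> t" then show "\<bar>g' t\<bar> \<le> M * exp (- c * t)" using b[of t] by simp
    qed
    then show ?thesis using cM[of y] True by simp
  next
    case False
    have d2: "((\<lambda>x. g (- x)) has_real_derivative - g' (- x)) (at x)" for x
      using d[of "- x"] DERIV_mirror by simp
    have "\<bar>g (- (- y))\<bar> \<le> M / c * exp (- c * (- y))"
    proof (rule tail_bound[OF d2 lim_from_bound, of K a c M "- y"])
      show "\<And>y. \<bar>g (- y)\<bar> \<le> K * exp (- a * \<bar>y\<bar>)" using gb[of "- _"] by simp
    next
      fix t :: real assume "0 \<le> t" then show "\<bar>- g' (- t)\<bar> \<le> M * exp (- c * t)" using b[of "- t"] by simp
    qed (use c False a in auto)
    then show ?thesis using cM[of "- y"] False by simp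
  qed
qed

context setting begin

lemma Ew_bound: "\<exists>M\<ge>0. \<forall>w\<in>I. \<forall>y. \<bar>Ew w y\<bar> \<le> M * w * exp (- (\<alpha> w + sqrt (2 - (\<alpha> w)\<^sup>2)) * \<bar>y\<bar>)"
proof -
  obtain M where M: "M \<ge> 0" "\<forall>w\<in>I. \<forall>y. \<bar>Ew' w y\<bar> \<le> M * w * exp (- (\<alpha> w + sqrt (2 - (\<alpha> w)\<^sup>2)) * \<bar>y\<bar>)"
    using Ew'_bound by blast
  show ?thesis
  proof (intro exI[of _ M] conjI ballI allI)
    fix w y assume w: "w \<in> I"
    obtain K where K: "\<And>y. \<bar>Ew w y\<bar> \<le> K * exp (- (2 * \<alpha> w) * \<bar>y\<bar>)" using Ew_small[OF w] by blast
    show "\<bar>Ew w y\<bar> \<le> M * w * exp (- (\<alpha> w + sqrt (2 - (\<alpha> w)\<^sup>2)) * \<bar>y\<bar>)"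
    proof (rule tail_both[OF Ew_deriv[OF w] K])
      show "1 \<le> \<alpha> w + sqrt (2 - (\<alpha> w)\<^sup>2)" using \<alpha>I[OF w] kap[OF w] by linarith
      show "0 \<le> M * w" using M wI[OF w] by simp
      show "0 < 2 * \<alpha> w" using \<alpha>I[OF w] by simp
    qed (use M w in \<open>auto simp: mult.assoc\<close>)
  qed (use M in auto)
qed

lemma q_sq: "\<exists>C\<ge>0. \<forall>w\<in>I. \<forall>y. \<bar>(qf W2 w y)\<^sup>2 - (\<alpha> w)\<^sup>2\<bar> \<le> C * EE \<alpha> w y"
proof -
  obtain M where M: "M \<ge> 0" "\<forall>w\<in>I. \<forall>y. \<bar>Ew w y\<bar> \<le> M * w * exp (- (\<alpha> w + sqrt (2 - (\<alpha> w)\<^sup>2)) * \<bar>y\<bar>)"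
    using Ew_bound by blast
  show ?thesis
  proof (intro exI[of _ "4 * M"] conjI ballI allI)
    fix w y assume w: "w \<in> I"
    define ea where "ea = exp (- \<alpha> w * \<bar>y\<bar>)"
    have Wp: "0 < W2 w y" using W2_pos[OF w] .
    have lo: "ea / 2 \<le> W2 w y" using Wlow[OF w] unfolding ea_def .
    have eap: "0 < ea" unfolding ea_def by simp
    have lo2: "(ea / 2)\<^sup>2 \<le> (W2 w y)\<^sup>2" using power_mono[OF lo, of 2] eap by simp
    have eq: "(qf W2 w y)\<^sup>2 - (\<alpha> w)\<^sup>2 = Ew w y / (W2 w y)\<^sup>2"
      unfolding qf_def Ew_def using Wp by (simp add: field_simps power2_eq_square)
    have "\<bar>Ew w y / (W2 w y)\<^sup>2\<bar> = \<bar>Ew w y\<bar> / (W2 w y)\<^sup>2" by (simp add: abs_div)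
    also have "\<dots> \<le> \<bar>Ew w y\<bar> / (ea / 2)\<^sup>2"
      by (rule divide_left_mono[OF lo2]) (use eap Wp in auto)
    also have "\<dots> \<le> (M * w * exp (- (\<alpha> w + sqrt (2 - (\<alpha> w)\<^sup>2)) * \<bar>y\<bar>)) / (ea / 2)\<^sup>2"
      by (rule divide_right_mono) (use M w eap in auto)
    also have "\<dots> = 4 * M * EE \<alpha> w y"
      unfolding EE_def ea_def by (simp add: field_simps power2_eq_square mult_exp_exp exp_minus[symmetric] exp_add[symmetric])
    finally show "\<bar>(qf W2 w y)\<^sup>2 - (\<alpha> w)\<^sup>2\<bar> \<le> 4 * M * EE \<alpha> w y" unfolding eq .
  qed (use M in auto)
qed

end


context setting begin

lemma deriv_q: "w \<in> I \<Longrightarrow> deriv (qf W2 w) = (\<lambda>y. (\<alpha> w)\<^sup>2 - qf W2 w y * qf W2 w y + Nf w y - (1 - (\<alpha> w)\<^sup>2) * DW w y)"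
proof (rule ext, rule DERIV_imp_deriv)
  fix y assume w: "w \<in> I"
  have W0: "W2 w y \<noteq> 0" using W2_pos[OF w, of y] by simp
  have "(qf W2 w has_real_derivative (deriv (deriv (W2 w)) y * W2 w y - deriv (W2 w) y * deriv (W2 w) y) / (W2 w y * W2 w y)) (at y)"
    unfolding qf_def[abs_def] by (rule DERIV_divide[OF W2'_deriv[OF w] W2_deriv[OF w] W0])
  moreover have "(deriv (deriv (W2 w)) y * W2 w y - deriv (W2 w) y * deriv (W2 w) y) / (W2 w y * W2 w y)
     = (\<alpha> w)\<^sup>2 - qf W2 w y * qf W2 w y + Nf w y - (1 - (\<alpha> w)\<^sup>2) * DW w y"
    unfolding W2_dd[OF w] qf_def DW_def using W0 by (simp add: field_simps power2_eq_square)
  ultimately show "(qf W2 w has_real_derivative (\<alpha> w)\<^sup>2 - qf W2 w y * qf W2 w y + Nf w y - (1 - (\<alpha> w)\<^sup>2) * DW w y) (at y)"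
    by simp
qed

lemma G_dq0: "G I 0 (EE \<alpha>) (\<lambda>w. deriv (qf W2 w))"
proof -
  have d: "G I 0 (\<lambda>w y. 1) (\<lambda>w. deriv (qf W2 w))" using G_shift[OF G_q[of "Suc 0"]] .
  obtain C where C: "C \<ge> 0" "\<forall>w\<in>I. \<forall>y. \<bar>(qf W2 w y)\<^sup>2 - (\<alpha> w)\<^sup>2\<bar> \<le> C * EE \<alpha> w y" using q_sq by blast
  obtain CN where CN: "CN \<ge> 0" "\<forall>w\<in>I. \<forall>y. \<bar>Dk 0 (Nf w) y\<bar> \<le> CN * EE \<alpha> w y"
    using G_bound[OF G_N] by blast
  obtain CD where CD: "CD \<ge> 0" "\<forall>w\<in>I. \<forall>y. \<bar>Dk 0 (DW w) y\<bar> \<le> CD * EE \<alpha> w y"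
    using G_bound[OF G_DW] by blast
  show ?thesis unfolding G_0
  proof (intro conjI exI[of _ "C + CN + CD"] ballI allI)
    fix w x assume "w \<in> I" then show "deriv (qf W2 w) differentiable at x" using d unfolding G_0 by blast
  next
    fix w y assume w: "w \<in> I"
    define l where "l = 1 - (\<alpha> w)\<^sup>2"
    have l: "0 \<le> l" "l \<le> 1" using \<alpha>I[OF w] unfolding l_def by (auto simp: power_le_one)
    have b1: "\<bar>(qf W2 w y)\<^sup>2 - (\<alpha> w)\<^sup>2\<bar> \<le> C * EE \<alpha> w y" using C w by blast
    have b2: "\<bar>Nf w y\<bar> \<le> CN * EE \<alpha> w y" using CN w by simp
    have b3: "\<bar>DW w y\<bar> \<le> CD * EE \<alpha> w y" using CD w by simp
    have "\<bar>l * DW w y\<bar> \<le> 1 * (CD * EE \<alpha> w y)" unfolding abs_mult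
      by (intro mult_mono b3) (use l in auto)
    then have "\<bar>(\<alpha> w)\<^sup>2 - qf W2 w y * qf W2 w y + Nf w y - l * DW w y\<bar> \<le> (C + CN + CD) * EE \<alpha> w y"
      using b1 b2 by (simp add: algebra_simps power2_eq_square abs_le_iff)
    then show "\<bar>deriv (qf W2 w) y\<bar> \<le> (C + CN + CD) * EE \<alpha> w y" unfolding deriv_q[OF w] l_def .
  qed (use C CN CD in auto)
qed

lemma smooth_q: "w \<in> I \<Longrightarrow> smooth_fun (qf W2 w)" using G_smooth[OF G_q] .
lemma smooth_N: "w \<in> I \<Longrightarrow> smooth_fun (Nf w)" using G_smooth[OF G_N] .
lemma smooth_P: "w \<in> I \<Longrightarrow> smooth_fun (Pf w)" using G_smooth[OF G_P] .
lemma smooth_DW: "w \<in> I \<Longrightarrow> smooth_fun (DW w)" using G_smooth[OF G_DW] .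

lemma G_dq: "G I n (EE \<alpha>) (\<lambda>w. deriv (qf W2 w))"
proof (induction n)
  case 0 then show ?case by (rule G_dq0)
next
  case (Suc n)
  have l: "G I n (\<lambda>w y. 1) (\<lambda>w y. 1 - (\<alpha> w)\<^sup>2)"
    by (rule G_const[of _ _ 1]) (use \<alpha>I in \<open>force simp: power_le_one\<close>)
  have A: "G I n (EE \<alpha>) (\<lambda>w y. deriv (qf W2 w) y * qf W2 w y)"
    using G_mult[OF Suc.IH G_q] by (rule G_weight[of _ _ _ _ 1]) auto
  have B: "G I n (EE \<alpha>) (\<lambda>w y. qf W2 w y * deriv (qf W2 w) y)"
    using G_mult[OF G_q Suc.IH] by (rule G_weight[of _ _ _ _ 1]) auto
  have Cc: "G I n (EE \<alpha>) (\<lambda>w y. (1 - (\<alpha> w)\<^sup>2) * deriv (DW w) y)"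
    using G_mult[OF l G_shift[OF G_DW]] by (rule G_weight[of _ _ _ _ 1]) auto
  have "G I n (EE \<alpha>) (\<lambda>w y. - (deriv (qf W2 w) y * qf W2 w y + qf W2 w y * deriv (qf W2 w) y) + deriv (Nf w) y - (1 - (\<alpha> w)\<^sup>2) * deriv (DW w) y)"
    using G_sub[OF G_add[OF G_scale[OF G_add[OF A B], of "-1"] G_shift[OF G_N]] Cc] by simp
  then have "G I n (EE \<alpha>) (\<lambda>w. deriv (deriv (qf W2 w)))"
  proof (rule G_cong)
    fix w assume w: "w \<in> I"
    note s = smooth_q[OF w] smooth_N[OF w] smooth_DW[OF w]
    show "(\<lambda>y. - (deriv (qf W2 w) y * qf W2 w y + qf W2 w y * deriv (qf W2 w) y) + deriv (Nf w) y - (1 - (\<alpha> w)\<^sup>2) * deriv (DW w) y)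
      = deriv (deriv (qf W2 w))"
    proof -
      have "deriv (deriv (qf W2 w)) = deriv (\<lambda>y. (\<alpha> w)\<^sup>2 - qf W2 w y * qf W2 w y + Nf w y - (1 - (\<alpha> w)\<^sup>2) * DW w y)"
        by (subst deriv_q[OF w]) (rule refl)
      also have "\<dots> = (\<lambda>y. - (deriv (qf W2 w) y * qf W2 w y + qf W2 w y * deriv (qf W2 w) y) + deriv (Nf w) y - (1 - (\<alpha> w)\<^sup>2) * deriv (DW w) y)"
        using s by simp
      finally show ?thesis by (rule sym)
    qed
  qed
  then show ?case using G_dq0 unfolding G_Suc by blast
qed

end


definition K2g :: "(real \<Rightarrow> real) \<Rightarrow> (real \<Rightarrow> real) \<Rightarrow> (real \<Rightarrow> real) \<Rightarrow> real \<Rightarrow> real" where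
  "K2g q N P y = - N y - P y + 4 * deriv q y"
definition K1g :: "(real \<Rightarrow> real) \<Rightarrow> (real \<Rightarrow> real) \<Rightarrow> (real \<Rightarrow> real) \<Rightarrow> real \<Rightarrow> real" where
  "K1g q N P y = -3 * deriv N y - deriv P y + 6 * deriv (deriv q) y + 4 * q y * deriv q y"
definition K0g :: "(real \<Rightarrow> real) \<Rightarrow> (real \<Rightarrow> real) \<Rightarrow> (real \<Rightarrow> real) \<Rightarrow> real \<Rightarrow> real" where
  "K0g q N P y = -3 * deriv (deriv N) y + P y + N y + P y * N y + 2 * q y * deriv N y
     + 4 * deriv (deriv (deriv q)) y + 2 * K2g q N P y * deriv q y - 4 * deriv q y + K1g q N P y * q y"
definition Rg :: "(real \<Rightarrow> real) \<Rightarrow> (real \<Rightarrow> real) \<Rightarrow> (real \<Rightarrow> real) \<Rightarrow> real \<Rightarrow> real" where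
  "Rg q N P y = deriv P y * (1 + N y) + (1 + P y) * deriv N y - deriv (deriv (deriv N)) y
     - q y * ((1 + P y) * (1 + N y) - deriv (deriv N) y) + deriv (deriv (deriv (deriv q))) y
     + (K2g q N P y - 2) * deriv (deriv q) y + K1g q N P y * deriv q y + (K0g q N P y + 1) * q y"

lemma op_id:
  fixes f q N P :: "real \<Rightarrow> real"
  assumes s: "smooth_fun f" "smooth_fun q" "smooth_fun N" "smooth_fun P"
  shows "deriv (\<lambda>y. - deriv (deriv (\<lambda>y. - deriv (deriv f) y + f y + N y * f y)) y
            + (- deriv (deriv f) y + f y + N y * f y) + P y * (- deriv (deriv f) y + f y + N y * f y)) y
        - q y * (- deriv (deriv (\<lambda>y. - deriv (deriv f) y + f y + N y * f y)) y
            + (- deriv (deriv f) y + f y + N y * f y) + P y * (- deriv (deriv f) y + f y + N y * f y))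
    = Dk 4 (\<lambda>y. deriv f y - q y * f y) y - 2 * Dk 2 (\<lambda>y. deriv f y - q y * f y) y
      + K2g q N P y * Dk 2 (\<lambda>y. deriv f y - q y * f y) y + K1g q N P y * Dk 1 (\<lambda>y. deriv f y - q y * f y) y
      + K0g q N P y * (deriv f y - q y * f y) + (deriv f y - q y * f y) + Rg q N P y * f y"
  using s unfolding Dk_4 Dk_2 Dk_1
  apply simp
  unfolding K2g_def K1g_def K0g_def Rg_def
  apply (simp add: algebra_simps)
  done


context setting begin

lemma G_EE1: "G I n (EE \<alpha>) f \<Longrightarrow> G I n (\<lambda>w y. 1) g \<Longrightarrow> G I n (EE \<alpha>) (\<lambda>w y. f w y * g w y)"
  by (drule (1) G_mult) (rule G_weight[of _ _ _ _ 1], auto)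
lemma G_1EE: "G I n (\<lambda>w y. 1) g \<Longrightarrow> G I n (EE \<alpha>) f \<Longrightarrow> G I n (EE \<alpha>) (\<lambda>w y. g w y * f w y)"
  by (drule (1) G_mult) (rule G_weight[of _ _ _ _ 1], auto)
lemma G_EEEE: "G I n (EE \<alpha>) f \<Longrightarrow> G I n (EE \<alpha>) g \<Longrightarrow> G I n (EE \<alpha>) (\<lambda>w y. f w y * g w y)"
proof -
  assume a: "G I n (EE \<alpha>) f" "G I n (EE \<alpha>) g"
  have "G I n (\<lambda>w y. EE \<alpha> w y * EE \<alpha> w y) (\<lambda>w y. f w y * g w y)" by (rule G_mult[OF a])
  then show ?thesis
  proof (rule G_weight[of _ _ _ _ 1])
    fix w y assume w: "w \<in> I"
    show "EE \<alpha> w y * EE \<alpha> w y \<le> 1 * EE \<alpha> w y"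
      using EE_nonneg[OF w, of y] EE_le1[OF w, of y] by (simp add: mult_left_le_one_le)
  qed simp
qed

abbreviation "K2F \<equiv> (\<lambda>w. K2g (qf W2 w) (Nf w) (Pf w))"
abbreviation "K1F \<equiv> (\<lambda>w. K1g (qf W2 w) (Nf w) (Pf w))"
abbreviation "K0F \<equiv> (\<lambda>w. K0g (qf W2 w) (Nf w) (Pf w))"

lemma G_K2: "G I n (EE \<alpha>) K2F"
proof -
  have "G I n (EE \<alpha>) (\<lambda>w y. (-1) * Nf w y + (-1) * Pf w y + 4 * deriv (qf W2 w) y)"
    by (rule G_add[OF G_add[OF G_scale[OF G_N] G_scale[OF G_P]] G_scale[OF G_dq]])
  then show ?thesis by (rule G_cong) (auto simp: K2g_def[abs_def])
qed

lemma G_K1: "G I n (EE \<alpha>) K1F"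
proof -
  have "G I n (EE \<alpha>) (\<lambda>w y. (-3) * deriv (Nf w) y + (-1) * deriv (Pf w) y + 6 * deriv (deriv (qf W2 w)) y
          + 4 * (qf W2 w y * deriv (qf W2 w) y))"
    by (rule G_add[OF G_add[OF G_add[OF G_scale[OF G_shift[OF G_N]] G_scale[OF G_shift[OF G_P]]]
         G_scale[OF G_shift[OF G_dq]]] G_scale[OF G_1EE[OF G_q G_dq]]])
  then show ?thesis by (rule G_cong) (auto simp: K1g_def[abs_def] algebra_simps)
qed

lemma G_K0: "G I n (EE \<alpha>) K0F"
proof -
  have N2: "G I n (EE \<alpha>) (\<lambda>w. deriv (deriv (Nf w)))" by (rule G_shift[OF G_shift[OF G_N]])
  have q3: "G I n (EE \<alpha>) (\<lambda>w. deriv (deriv (deriv (qf W2 w))))" by (rule G_shift[OF G_shift[OF G_dq]])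
  have "G I n (EE \<alpha>) (\<lambda>w y. (-3) * deriv (deriv (Nf w)) y + Pf w y + Nf w y + Pf w y * Nf w y
      + 2 * (qf W2 w y * deriv (Nf w) y) + 4 * deriv (deriv (deriv (qf W2 w))) y
      + 2 * (K2F w y * deriv (qf W2 w) y) + (-4) * deriv (qf W2 w) y + K1F w y * qf W2 w y)"
    by (rule G_add[OF G_add[OF G_add[OF G_add[OF G_add[OF G_add[OF G_add[OF G_add[OF
          G_scale[OF N2] G_P] G_N] G_EEEE[OF G_P G_N]] G_scale[OF G_1EE[OF G_q G_shift[OF G_N]]]]
          G_scale[OF q3]] G_scale[OF G_EEEE[OF G_K2 G_dq]]] G_scale[OF G_dq]] G_EE1[OF G_K1 G_q]])
  then show ?thesis by (rule G_cong) (auto simp: K0g_def[abs_def] algebra_simps)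
qed

lemma Mminus_eq: "Mminus w f = (\<lambda>y. - deriv (deriv f) y + f y + Nf w y * f y)"
  by (rule ext) (simp add: Mminus_def Nf_def Dk_2 algebra_simps)
lemma Mplus_eq: "Mplus w f = (\<lambda>y. - deriv (deriv f) y + f y + Pf w y * f y)"
  by (rule ext) (simp add: Mplus_def Pf_def Dk_2 algebra_simps)
lemma Uop_eq: "Uop (W2 w) f = (\<lambda>y. deriv f y - qf W2 w y * f y)"
  by (rule ext) (simp add: Uop_def qf_def)

lemma main_id: "w \<in> I \<Longrightarrow> smooth_fun f \<Longrightarrow>
  Uop (W2 w) (Mplus w (Mminus w f)) y = Kop (K2F w) (K1F w) (K0F w) (Uop (W2 w) f) y + Rg (qf W2 w) (Nf w) (Pf w) y * f y"
  unfolding Mminus_eq Mplus_eq Uop_eq Kop_def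
  using op_id[of f "qf W2 w" "Nf w" "Pf w" y] smooth_q smooth_N smooth_P by simp

lemma smooth_W1: "w \<in> I \<Longrightarrow> smooth_fun (W1 w)" using G_smooth[OF G_W[THEN conjunct1]] .
lemma smooth_W2: "w \<in> I \<Longrightarrow> smooth_fun (W2 w)" using G_smooth[OF G_W[THEN conjunct2]] .

lemma R_zero: "w \<in> I \<Longrightarrow> Rg (qf W2 w) (Nf w) (Pf w) y = 0"
proof -
  assume w: "w \<in> I"
  define l where "l = 1 - (\<alpha> w)\<^sup>2"
  have W0: "W2 w y \<noteq> 0" using W2_pos[OF w, of y] by simp
  have m1: "Mminus w (W2 w) = (\<lambda>y. l * W1 w y)" using eq2[OF w] unfolding l_def by (intro ext) simp
  have m2: "Mplus w (\<lambda>y. l * W1 w y) = (\<lambda>y. l * (l * W2 w y))"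
  proof
    fix y
    have "Mplus w (\<lambda>y. l * W1 w y) y = l * Mplus w (W1 w) y"
      unfolding Mplus_def Dk_2 using smooth_W1[OF w] by (simp add: algebra_simps)
    then show "Mplus w (\<lambda>y. l * W1 w y) y = l * (l * W2 w y)" using eq1[OF w, of y] unfolding l_def by simp
  qed
  have "Uop (W2 w) (\<lambda>y. l * (l * W2 w y)) y = 0"
    unfolding Uop_def using smooth_W2[OF w] W0 by simp
  then have lhs: "Uop (W2 w) (Mplus w (Mminus w (W2 w))) y = 0" unfolding m1 m2 .
  have u0: "Uop (W2 w) (W2 w) = (\<lambda>y. 0)"
  proof
    fix y have "W2 w y \<noteq> 0" using W2_pos[OF w, of y] by simp
    then show "Uop (W2 w) (W2 w) y = 0" unfolding Uop_def by simp
  qed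
  have "Kop (K2F w) (K1F w) (K0F w) (Uop (W2 w) (W2 w)) y = 0"
    unfolding u0 Kop_def Dk_4 Dk_2 Dk_1 by simp
  then show ?thesis using main_id[OF w smooth_W2[OF w], of y] lhs W0 by simp
qed

lemma op_final: "w \<in> I \<Longrightarrow> smooth_fun f \<Longrightarrow> Uop (W2 w) (Mplus w (Mminus w f)) = Kop (K2F w) (K1F w) (K0F w) (Uop (W2 w) f)"
  by (rule ext) (simp add: main_id R_zero)

end


lemma pd_y_pow: "(pd_y ^^ k) F = (\<lambda>w. (deriv ^^ k) (F w))"
  by (induction k) (auto simp: pd_y_def)

lemma iter_pd_Dk: "iter_pd (replicate k False) F w = Dk k (F w)"
  unfolding iter_pd_def Dk_def by (simp add: fold_replicate pd_y_pow)

lemma smooth2_Dk: "smooth2_on ({0<..<\<omega>1} \<times> UNIV) F \<Longrightarrow> w \<in> {0<..<\<omega>1} \<Longrightarrow> Dk k (F w) differentiable (at x)"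
proof -
  assume s: "smooth2_on ({0<..<\<omega>1} \<times> UNIV) F" and w: "w \<in> {0<..<\<omega>1}"
  have "(w, x) \<in> {0<..<\<omega>1} \<times> (UNIV :: real set)" using w by simp
  then have "iter_pd (replicate k False) F w differentiable (at x)"
    using s unfolding smooth2_on_def by (metis fst_conv snd_conv)
  then show ?thesis unfolding iter_pd_Dk .
qed

theorem lemma3:
  fixes \<omega>1 :: real and \<alpha> :: "real \<Rightarrow> real" and W1 W2 :: "real \<Rightarrow> real \<Rightarrow> real"
  assumes \<omega>1_pos: "\<omega>1 > 0"
    and \<alpha>_smooth: "smooth_on1 {0<..<\<omega>1} \<alpha>"
    and \<alpha>_pos: "\<forall>w\<in>{0<..<\<omega>1}. \<alpha> w > 0"
    and \<alpha>_asym: "\<exists>C. \<forall>w\<in>{0<..<\<omega>1}. \<bar>\<alpha> w - 8/9 * w\<bar> \<le> C * w\<^sup>2"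
    and W1_smooth: "smooth2_on ({0<..<\<omega>1} \<times> UNIV) W1"
    and W2_smooth: "smooth2_on ({0<..<\<omega>1} \<times> UNIV) W2"
    and W1_even: "\<forall>w\<in>{0<..<\<omega>1}. \<forall>y. W1 w (- y) = W1 w y"
    and W2_even: "\<forall>w\<in>{0<..<\<omega>1}. \<forall>y. W2 w (- y) = W2 w y"
    and eq1: "\<forall>w\<in>{0<..<\<omega>1}. \<forall>y. Mplus w (W1 w) y = (1 - (\<alpha> w)\<^sup>2) * W2 w y"
    and eq2: "\<forall>w\<in>{0<..<\<omega>1}. \<forall>y. Mminus w (W2 w) y = (1 - (\<alpha> w)\<^sup>2) * W1 w y"
    and bd1: "\<forall>k. \<exists>C. \<forall>w\<in>{0<..<\<omega>1}. \<forall>y.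
                \<bar>Dk k (W1 w) y\<bar> \<le> C * (w ^ k * exp (- \<alpha> w * \<bar>y\<bar>) + w * exp (- \<bar>y\<bar>)) \<and>
                \<bar>Dk k (W2 w) y\<bar> \<le> C * (w ^ k * exp (- \<alpha> w * \<bar>y\<bar>) + w * exp (- \<bar>y\<bar>))"
    and bd2: "\<forall>k. \<exists>C. \<forall>w\<in>{0<..<\<omega>1}. \<forall>y.
                \<bar>Dk k (\<lambda>y. W1 w y - W2 w y) y\<bar> \<le> C * w * exp (- sqrt (2 - (\<alpha> w)\<^sup>2) * \<bar>y\<bar>)"
    and bd3: "\<exists>C. \<forall>w\<in>{0<..<\<omega>1}. \<forall>y.
                \<bar>W1 w y - exp (- \<alpha> w * \<bar>y\<bar>)\<bar> \<le> C * w * exp (- \<alpha> w * \<bar>y\<bar>) \<and>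
                \<bar>W2 w y - exp (- \<alpha> w * \<bar>y\<bar>)\<bar> \<le> C * w * exp (- \<alpha> w * \<bar>y\<bar>)"
  shows "\<exists>\<omega>0>0. \<omega>0 \<le> \<omega>1 \<and> (\<exists>K2 K1 K0 :: real \<Rightarrow> real \<Rightarrow> real.
           (\<forall>w\<in>{0<..<\<omega>0}. smooth_fun (K2 w) \<and> smooth_fun (K1 w) \<and> smooth_fun (K0 w) \<and>
              (\<forall>f. smooth_fun f \<longrightarrow>
                 Uop (W2 w) (Mplus w (Mminus w f)) = Kop (K2 w) (K1 w) (K0 w) (Uop (W2 w) f))) \<and>
           (\<forall>k. \<exists>C. \<forall>w\<in>{0<..<\<omega>0}. \<forall>y.
              \<bar>Dk k (K2 w) y\<bar> + \<bar>Dk k (K1 w) y\<bar> + \<bar>Dk k (K0 w) y\<bar>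
                \<le> C * w * exp (- (sqrt (2 - (\<alpha> w)\<^sup>2) - \<alpha> w) * \<bar>y\<bar>)))"
proof -
  obtain Ca where Ca: "\<forall>w\<in>{0<..<\<omega>1}. \<bar>\<alpha> w - 8/9 * w\<bar> \<le> Ca * w\<^sup>2" using \<alpha>_asym by blast
  obtain C3 where C3: "\<forall>w\<in>{0<..<\<omega>1}. \<forall>y. \<bar>W2 w y - exp (- \<alpha> w * \<bar>y\<bar>)\<bar> \<le> C3 * w * exp (- \<alpha> w * \<bar>y\<bar>)"
    using bd3 by blast
  define \<omega>0 where "\<omega>0 = min \<omega>1 (min (1/2) (min (1 / (9 * (\<bar>Ca\<bar> + 1))) (1 / (2 * (\<bar>C3\<bar> + 1)))))"
  have p1: "0 < 9 * (\<bar>Ca\<bar> + 1)" "0 < 2 * (\<bar>C3\<bar> + 1)" using abs_ge_zero[of Ca] abs_ge_zero[of C3] by simp_all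
  have \<omega>0_pos: "\<omega>0 > 0" unfolding \<omega>0_def using \<omega>1_pos p1 by simp
  have \<omega>0_le: "\<omega>0 \<le> \<omega>1" unfolding \<omega>0_def by simp
  define I where "I = {0<..<\<omega>0}"
  have sub: "\<And>w. w \<in> I \<Longrightarrow> w \<in> {0<..<\<omega>1}" unfolding I_def using \<omega>0_le by auto
  have wsmall: "\<And>w. w \<in> I \<Longrightarrow> 0 < w \<and> w \<le> 1/2 \<and> w * (9 * (\<bar>Ca\<bar> + 1)) \<le> 1 \<and> w * (2 * (\<bar>C3\<bar> + 1)) \<le> 1"
  proof -
    fix w assume "w \<in> I"
    then have w: "0 < w" "w < \<omega>0" unfolding I_def by auto
    have "w \<le> 1 / (9 * (\<bar>Ca\<bar> + 1))" "w \<le> 1 / (2 * (\<bar>C3\<bar> + 1))" "w \<le> 1/2"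
      using w unfolding \<omega>0_def by auto
    then show "0 < w \<and> w \<le> 1/2 \<and> w * (9 * (\<bar>Ca\<bar> + 1)) \<le> 1 \<and> w * (2 * (\<bar>C3\<bar> + 1)) \<le> 1"
      using w by (simp add: le_divide_eq add_pos_nonneg mult.commute)
  qed
  interpret S: setting I \<alpha> W1 W2
  proof
    fix w assume w: "w \<in> I"
    then show "0 < w \<and> w \<le> 1" using wsmall[OF w] by simp
    have w1: "w \<in> {0<..<\<omega>1}" using sub[OF w] .
    have ws: "0 < w" "w * (9 * (\<bar>Ca\<bar> + 1)) \<le> 1" using wsmall[OF w] by auto
    have "\<alpha> w - 8/9 * w \<le> Ca * w\<^sup>2" using Ca w1 by force
    moreover have "Ca * w\<^sup>2 \<le> \<bar>Ca\<bar> * w\<^sup>2" by (intro mult_right_mono) auto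
    moreover have "\<bar>Ca\<bar> * w\<^sup>2 \<le> w / 9"
    proof -
      have "\<bar>Ca\<bar> * w \<le> 1/9" using ws by (simp add: algebra_simps)
      then have "(\<bar>Ca\<bar> * w) * w \<le> (1/9) * w" using ws by (intro mult_right_mono) auto
      then show ?thesis by (simp add: power2_eq_square mult_ac)
    qed
    moreover have "w \<le> 1" using wsmall[OF w] by simp
    ultimately have "\<alpha> w \<le> 1" by linarith
    then show "0 < \<alpha> w \<and> \<alpha> w \<le> 1" using \<alpha>_pos w1 by auto
  next
    fix w k x assume w: "w \<in> I"
    show "Dk k (W1 w) differentiable at x" by (rule smooth2_Dk[OF W1_smooth sub[OF w]])
    show "Dk k (W2 w) differentiable at x" by (rule smooth2_Dk[OF W2_smooth sub[OF w]])
  next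
    fix w y assume w: "w \<in> I"
    define e where "e = exp (- \<alpha> w * \<bar>y\<bar>)"
    have e: "0 < e" unfolding e_def by simp
    have b: "\<bar>W2 w y - e\<bar> \<le> C3 * w * e" using C3 sub[OF w] unfolding e_def by blast
    have ws: "0 < w" "w * (2 * (\<bar>C3\<bar> + 1)) \<le> 1" using wsmall[OF w] by auto
    have "C3 * w \<le> 1/2"
    proof -
      have "C3 * w \<le> \<bar>C3\<bar> * w" using ws by (intro mult_right_mono) auto
      also have "\<dots> \<le> 1/2" using ws by (simp add: algebra_simps)
      finally show ?thesis .
    qed
    then have "C3 * w * e \<le> 1/2 * e" using e by (intro mult_right_mono) auto
    then show "exp (- \<alpha> w * \<bar>y\<bar>) / 2 \<le> W2 w y" using b unfolding e_def[symmetric] by linarith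
  next
    fix w y assume w: "w \<in> I"
    show "Mplus w (W1 w) y = (1 - (\<alpha> w)\<^sup>2) * W2 w y" using eq1 sub[OF w] by blast
    show "Mminus w (W2 w) y = (1 - (\<alpha> w)\<^sup>2) * W1 w y" using eq2 sub[OF w] by blast
  next
    fix k
    obtain C where C: "\<forall>w\<in>{0<..<\<omega>1}. \<forall>y.
                \<bar>Dk k (W1 w) y\<bar> \<le> C * (w ^ k * exp (- \<alpha> w * \<bar>y\<bar>) + w * exp (- \<bar>y\<bar>)) \<and>
                \<bar>Dk k (W2 w) y\<bar> \<le> C * (w ^ k * exp (- \<alpha> w * \<bar>y\<bar>) + w * exp (- \<bar>y\<bar>))" using bd1 by blast
    then show "\<exists>C. \<forall>w\<in>I. \<forall>y.
                \<bar>Dk k (W1 w) y\<bar> \<le> C * (w ^ k * exp (- \<alpha> w * \<bar>y\<bar>) + w * exp (- \<bar>y\<bar>)) \<and>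
                \<bar>Dk k (W2 w) y\<bar> \<le> C * (w ^ k * exp (- \<alpha> w * \<bar>y\<bar>) + w * exp (- \<bar>y\<bar>))"
      using sub by blast
  next
    fix k
    obtain C where C: "\<forall>w\<in>{0<..<\<omega>1}. \<forall>y.
                \<bar>Dk k (\<lambda>y. W1 w y - W2 w y) y\<bar> \<le> C * w * exp (- sqrt (2 - (\<alpha> w)\<^sup>2) * \<bar>y\<bar>)" using bd2 by blast
    then show "\<exists>C. \<forall>w\<in>I. \<forall>y.
                \<bar>Dk k (\<lambda>y. W1 w y - W2 w y) y\<bar> \<le> C * w * exp (- sqrt (2 - (\<alpha> w)\<^sup>2) * \<bar>y\<bar>)"
      using sub by blast
  qed
  have H1: "\<forall>w\<in>{0<..<\<omega>0}. smooth_fun (K2g (qf W2 w) (Nf w) (Pf w)) \<and> smooth_fun (K1g (qf W2 w) (Nf w) (Pf w)) \<and> smooth_fun (K0g (qf W2 w) (Nf w) (Pf w)) \<and>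
              (\<forall>f. smooth_fun f \<longrightarrow>
                 Uop (W2 w) (Mplus w (Mminus w f)) = Kop (K2g (qf W2 w) (Nf w) (Pf w)) (K1g (qf W2 w) (Nf w) (Pf w)) (K0g (qf W2 w) (Nf w) (Pf w)) (Uop (W2 w) f))"
  proof (intro ballI conjI allI impI)
    fix w assume w: "w \<in> {0<..<\<omega>0}"
    then have wI: "w \<in> I" unfolding I_def .
    show "smooth_fun (K2g (qf W2 w) (Nf w) (Pf w))" using G_smooth[OF S.G_K2 wI] .
    show "smooth_fun (K1g (qf W2 w) (Nf w) (Pf w))" using G_smooth[OF S.G_K1 wI] .
    show "smooth_fun (K0g (qf W2 w) (Nf w) (Pf w))" using G_smooth[OF S.G_K0 wI] .
    fix f :: "real \<Rightarrow> real" assume "smooth_fun f"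
    then show "Uop (W2 w) (Mplus w (Mminus w f)) = Kop (K2g (qf W2 w) (Nf w) (Pf w)) (K1g (qf W2 w) (Nf w) (Pf w)) (K0g (qf W2 w) (Nf w) (Pf w)) (Uop (W2 w) f)"
      using S.op_final[OF wI] by blast
  qed
  have H2: "\<forall>k. \<exists>C. \<forall>w\<in>{0<..<\<omega>0}. \<forall>y.
              \<bar>Dk k (K2g (qf W2 w) (Nf w) (Pf w)) y\<bar> + \<bar>Dk k (K1g (qf W2 w) (Nf w) (Pf w)) y\<bar> + \<bar>Dk k (K0g (qf W2 w) (Nf w) (Pf w)) y\<bar>
                \<le> C * w * exp (- (sqrt (2 - (\<alpha> w)\<^sup>2) - \<alpha> w) * \<bar>y\<bar>)"
  proof
    fix k
    obtain A2 where A2: "A2 \<ge> 0" "\<forall>w\<in>I. \<forall>y. \<bar>Dk k (K2g (qf W2 w) (Nf w) (Pf w)) y\<bar> \<le> A2 * EE \<alpha> w y"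
      using G_bound[OF S.G_K2] by blast
    obtain A1 where A1: "A1 \<ge> 0" "\<forall>w\<in>I. \<forall>y. \<bar>Dk k (K1g (qf W2 w) (Nf w) (Pf w)) y\<bar> \<le> A1 * EE \<alpha> w y"
      using G_bound[OF S.G_K1] by blast
    obtain A0 where A0: "A0 \<ge> 0" "\<forall>w\<in>I. \<forall>y. \<bar>Dk k (K0g (qf W2 w) (Nf w) (Pf w)) y\<bar> \<le> A0 * EE \<alpha> w y"
      using G_bound[OF S.G_K0] by blast
    show "\<exists>C. \<forall>w\<in>{0<..<\<omega>0}. \<forall>y.
              \<bar>Dk k (K2g (qf W2 w) (Nf w) (Pf w)) y\<bar> + \<bar>Dk k (K1g (qf W2 w) (Nf w) (Pf w)) y\<bar> + \<bar>Dk k (K0g (qf W2 w) (Nf w) (Pf w)) y\<bar>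
                \<le> C * w * exp (- (sqrt (2 - (\<alpha> w)\<^sup>2) - \<alpha> w) * \<bar>y\<bar>)"
    proof (intro exI[of _ "A2 + A1 + A0"] ballI allI)
      fix w y assume "w \<in> {0<..<\<omega>0}"
      then have wI: "w \<in> I" unfolding I_def .
      have "\<bar>Dk k (K2g (qf W2 w) (Nf w) (Pf w)) y\<bar> + \<bar>Dk k (K1g (qf W2 w) (Nf w) (Pf w)) y\<bar> + \<bar>Dk k (K0g (qf W2 w) (Nf w) (Pf w)) y\<bar>
          \<le> A2 * EE \<alpha> w y + A1 * EE \<alpha> w y + A0 * EE \<alpha> w y"
        using A2(2) A1(2) A0(2) wI by (intro add_mono) auto
      also have "\<dots> = (A2 + A1 + A0) * w * exp (- (sqrt (2 - (\<alpha> w)\<^sup>2) - \<alpha> w) * \<bar>y\<bar>)"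
        unfolding EE_def by (simp add: algebra_simps)
      finally show "\<bar>Dk k (K2g (qf W2 w) (Nf w) (Pf w)) y\<bar> + \<bar>Dk k (K1g (qf W2 w) (Nf w) (Pf w)) y\<bar> + \<bar>Dk k (K0g (qf W2 w) (Nf w) (Pf w)) y\<bar>
                \<le> (A2 + A1 + A0) * w * exp (- (sqrt (2 - (\<alpha> w)\<^sup>2) - \<alpha> w) * \<bar>y\<bar>)" .
    qed
  qed
  show ?thesis
    apply (rule exI[of _ \<omega>0])
    apply (intro conjI \<omega>0_pos \<omega>0_le)
    apply (rule exI[of _ "\<lambda>w. K2g (qf W2 w) (Nf w) (Pf w)"])
    apply (rule exI[of _ "\<lambda>w. K1g (qf W2 w) (Nf w) (Pf w)"])
    apply (rule exI[of _ "\<lambda>w. K0g (qf W2 w) (Nf w) (Pf w)"])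
    using H1 H2 by blast
qed


end
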